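(* Let $m=2k+1$ with $k$ a nonnegative integer and let $n\ge m-1$ be an integer. Let $M(u)=M(u^2+u^{2m})$, $u\in(0,+\infty)$, where $M(h)$ is the first order Melnikov function of $(1.1)_\epsilon$. Put $z=[n/2]m-\frac{m^2-5m+4}{2}$ and $q=[n/2]m-\frac{m^2-5m}{2}$. Then $M(u)$ is a linear combination of the following $\left[\frac{n-1}{2}\right]+\left[\frac n2\right]m-\frac14m^2+\frac32m+\frac34$ linearly independent functions: $$u^{2p+1}\ (0\le p\le z);\qquad u^{2q+2s+k(m-1)+1}\ (0\le s\le \tfrac{m-5}{2},\ 0\le k\le 2s+1);\qquad (u^2+u^{2m})^{l+1}\ (0\le l\le[(n-1)/2]),$$ (i.e. $u,u^3,\dots,u^{2z+1},u^{2q+1},u^{2q+m},u^{2q+3},u^{2q+m+2},u^{2q+2m+1},\dots,u^{2q+m^2-4m},u^2+u^{2m},\dots,(u^2+u^{2m})^{[(n-1)/2]+1}$), and the coefficients of this linear combination are independent, i.e. as the coefficients of $p^\pm,q^\pm$ range over all real values these coefficients take all real values.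
   Context: $[x]$ is the integer part. System $(1.1)_\epsilon$: $\dot x=y+\epsilon p^{+},\ \dot y=-x+\epsilon q^{+}$ for $y\ge x^{m}$, and $\dot x=y+\epsilon p^{-},\ \dot y=-x+\epsilon q^{-}$ for $y<x^{m}$, where $p^{\pm}=\sum_{i+j=0}^{n}a^{\pm}_{i,j}x^iy^j$, $q^{\pm}=\sum_{i+j=0}^{n}b^{\pm}_{i,j}x^iy^j$ are arbitrary real polynomials of degree $n$. For $h>0$, $u=u(h)>0$ solves $u^2+u^{2m}=h$; $L_h^{+}$ is the arc of $x^2+y^2=h$ in $\{y\ge x^m\}$ traversed clockwise from $(-u,(-u)^m)$ to $(u,u^m)$, and $L_h^-$ the arc in $\{y\le x^m\}$ traversed clockwise from $(u,u^m)$ to $(-u,(-u)^m)$. The first order Melnikov function is $M(h)=\int_{L_h^+}q^+dx-p^+dy+\int_{L_h^-}q^-dx-p^-dy$. *)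

theory Defs
  imports "HOL-Analysis.Analysis"
begin

definition poly2 :: "nat \<Rightarrow> (nat \<Rightarrow> nat \<Rightarrow> real) \<Rightarrow> real \<times> real \<Rightarrow> real" where
  "poly2 n a = (\<lambda>(x, y). \<Sum>i\<le>n. \<Sum>j\<le>n - i. a i j * x ^ i * y ^ j)"

definition line_integral ::
  "(real \<times> real \<Rightarrow> real) \<Rightarrow> (real \<times> real \<Rightarrow> real) \<Rightarrow> (real \<Rightarrow> real \<times> real) \<Rightarrow> real \<Rightarrow> real \<Rightarrow> real" where
  "line_integral P Q g a b =
     integral {a..b} (\<lambda>s. P (g s) * fst (vector_derivative g (at s))
                          + Q (g s) * snd (vector_derivative g (at s)))"

definition cw_arc :: "real \<Rightarrow> real \<Rightarrow> real \<Rightarrow> real \<times> real" where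
  "cw_arc r t0 s = (r * cos (t0 - s), r * sin (t0 - s))"

definition u_of :: "nat \<Rightarrow> real \<Rightarrow> real" where
  "u_of m h = (THE u. u > 0 \<and> u ^ 2 + u ^ (2 * m) = h)"

text \<open>The point (u,u^m) has polar angle
  alpha = arctan(u^m/u); since m is odd, (-u,(-u)^m) has polar angle alpha + pi.
  L+ is the clockwise half circle from angle alpha+pi to alpha, L- the clockwise
  half circle from angle alpha to alpha-pi.
  Arguments: ap = coefficients of p+, bp of q+, am of p-, bm of q-.\<close>
definition melnikov ::
  "nat \<Rightarrow> nat \<Rightarrow> (nat \<Rightarrow> nat \<Rightarrow> real) \<Rightarrow> (nat \<Rightarrow> nat \<Rightarrow> real)
     \<Rightarrow> (nat \<Rightarrow> nat \<Rightarrow> real) \<Rightarrow> (nat \<Rightarrow> nat \<Rightarrow> real) \<Rightarrow> real \<Rightarrow> real" where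
  "melnikov m n ap bp am bm h =
    (let u = u_of m h; r = sqrt h; \<alpha> = arctan (u ^ m / u) in
       line_integral (poly2 n bp) (\<lambda>z. - poly2 n ap z) (cw_arc r (\<alpha> + pi)) 0 pi
     + line_integral (poly2 n bm) (\<lambda>z. - poly2 n am z) (cw_arc r \<alpha>) 0 pi)"

definition zexp :: "nat \<Rightarrow> nat \<Rightarrow> int" where
  "zexp m n = int ((n div 2) * m) - (int m ^ 2 - 5 * int m + 4) div 2"

definition qexp :: "nat \<Rightarrow> nat \<Rightarrow> int" where
  "qexp m n = int ((n div 2) * m) - (int m ^ 2 - 5 * int m) div 2"

definition basis :: "nat \<Rightarrow> nat \<Rightarrow> (real \<Rightarrow> real) list" where
  "basis m n =
     map (\<lambda>p. \<lambda>u. u ^ (2 * p + 1)) [0..<nat (zexp m n + 1)]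
   @ concat (map (\<lambda>s. map (\<lambda>j. \<lambda>u. u ^ nat (2 * qexp m n + 2 * int s + int j * (int m - 1) + 1))
                          [0..<2 * s + 2])
                 [0..<nat ((int m - 3) div 2)])
   @ map (\<lambda>l. \<lambda>u. (u ^ 2 + u ^ (2 * m)) ^ (l + 1)) [0..<nat ((int n - 1) div 2 + 1)]"

end

theory Submission
  imports Defs
begin
definition Hd :: "nat \<Rightarrow> (nat \<Rightarrow> real) \<Rightarrow> real \<Rightarrow> real" where
  "Hd d \<kappa> t = (\<Sum>j\<le>d. \<kappa> j * cos t ^ (d - j) * sin t ^ j)"

definition RepO :: "nat \<Rightarrow> (real \<Rightarrow> real) \<Rightarrow> bool" where
  "RepO d f \<longleftrightarrow> (\<exists>\<kappa>. \<forall>t. (Hd d \<kappa> has_real_derivative f t) (at t))"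

definition RepE :: "(real \<Rightarrow> real) \<Rightarrow> bool" where
  "RepE f \<longleftrightarrow> (\<exists>c G. (\<forall>t. G (t + pi) = G t) \<and> (\<forall>t. (G has_real_derivative (f t - c)) (at t)))"

lemma D1: "((\<lambda>t. cos t ^ Suc a * sin t ^ Suc b) has_real_derivative
   (real (Suc b) * cos t ^ (a+2) * sin t ^ b - real (Suc a) * cos t ^ a * sin t ^ (b+2))) (at t)"
  apply (rule derivative_eq_intros refl)+
  apply (simp add: algebra_simps power2_eq_square)
  done

lemma D2: "((\<lambda>t. cos t ^ Suc a) has_real_derivative (- real (Suc a) * cos t ^ a * sin t)) (at t)"
  apply (rule derivative_eq_intros refl)+
  apply (simp add: algebra_simps)
  done

lemma D3: "((\<lambda>t. sin t ^ Suc b) has_real_derivative (real (Suc b) * cos t * sin t ^ b)) (at t)"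
  apply (rule derivative_eq_intros refl)+
  apply (simp add: algebra_simps)
  done

lemma D2': "((\<lambda>t. cos t ^ Suc a * sin t ^ 0) has_real_derivative (- real (Suc a) * cos t ^ a * sin t)) (at t)"
  using D2 by simp

lemma D3': "((\<lambda>t. cos t ^ 0 * sin t ^ Suc b) has_real_derivative (real (Suc b) * cos t * sin t ^ b)) (at t)"
  using D3 by simp

lemma Hd_lin: "Hd d (\<lambda>j. x * \<kappa>1 j + y * \<kappa>2 j) t = x * Hd d \<kappa>1 t + y * Hd d \<kappa>2 t"
  by (simp add: Hd_def sum_distrib_left sum.distrib algebra_simps)

lemma RepO_lin:
  assumes "RepO d f" "RepO d g"
  shows "RepO d (\<lambda>t. x * f t + y * g t)"
proof -
  obtain k1 where k1: "\<And>t. (Hd d k1 has_real_derivative f t) (at t)" using assms(1) RepO_def by blast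
  obtain k2 where k2: "\<And>t. (Hd d k2 has_real_derivative g t) (at t)" using assms(2) RepO_def by blast
  have e: "Hd d (\<lambda>j. x * k1 j + y * k2 j) = (\<lambda>t. x * Hd d k1 t + y * Hd d k2 t)"
    by (rule ext) (rule Hd_lin)
  show ?thesis unfolding RepO_def
    by (rule exI[of _ "\<lambda>j. x * k1 j + y * k2 j"], unfold e)
       (auto intro!: derivative_eq_intros k1 k2)
qed

lemma RepO_cong: "RepO d f \<Longrightarrow> d = d' \<Longrightarrow> (\<And>t. g t = f t) \<Longrightarrow> RepO d' g"
proof -
  assume "RepO d f" "\<And>t. g t = f t" "d = d'"
  then have "g = f" by auto
  then show ?thesis using \<open>RepO d f\<close> \<open>d = d'\<close> by simp
qed

lemma Hd_mono: "q \<le> d \<Longrightarrow> Hd d (\<lambda>j. if j = q then 1 else 0) t = cos t ^ (d - q) * sin t ^ q"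
proof -
  assume "q \<le> d"
  have "Hd d (\<lambda>j. if j = q then 1 else 0) t = (\<Sum>j\<le>d. if j = q then cos t ^ (d - j) * sin t ^ j else 0)"
    unfolding Hd_def by (rule sum.cong) auto
  also have "\<dots> = cos t ^ (d - q) * sin t ^ q" using \<open>q \<le> d\<close> by simp
  finally show ?thesis .
qed

lemma RepO_deriv:
  assumes "p + q = d" "\<And>t. ((\<lambda>t. cos t ^ p * sin t ^ q) has_real_derivative f t) (at t)"
  shows "RepO d f"
proof -
  have "Hd d (\<lambda>j. if j = q then 1 else 0) = (\<lambda>t. cos t ^ p * sin t ^ q)"
    using assms(1) by (auto simp: Hd_mono)
  then show ?thesis unfolding RepO_def using assms(2) by metis
qed

lemma P1: "RepO (a + 2*b' + 1) (\<lambda>t. cos t ^ a * sin t ^ (2*b'+1))"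
proof (induction b' arbitrary: a)
  case 0
  have "RepO (Suc a + 0) (\<lambda>t. - real (Suc a) * cos t ^ a * sin t)"
    by (rule RepO_deriv[OF refl D2'])
  then have X: "RepO (a+1) (\<lambda>t. - real (Suc a) * cos t ^ a * sin t)" by simp
  have "RepO (a+1) (\<lambda>t. (- 1 / real (Suc a)) * (- real (Suc a) * cos t ^ a * sin t) + 0 * (- real (Suc a) * cos t ^ a * sin t))"
    by (rule RepO_lin[OF X X])
  then show ?case by (rule RepO_cong) (simp_all add: field_simps del: of_nat_Suc)
next
  case (Suc b')
  have A: "RepO (a + 2*Suc b' + 1) (\<lambda>t. cos t ^ (a+2) * sin t ^ (2*b'+1))"
    using Suc.IH[of "a+2"] by (simp add: algebra_simps)
  have B: "RepO (a + 2*Suc b' + 1) (\<lambda>t. real (Suc (2*b'+1)) * cos t ^ (a+2) * sin t ^ (2*b'+1) - real (Suc a) * cos t ^ a * sin t ^ (2*b'+1+2))"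
    by (rule RepO_cong[OF RepO_deriv[OF refl D1[where a=a and b="2*b'+1"]]]) simp_all
  have "RepO (a + 2*Suc b' + 1) (\<lambda>t. (real (Suc (2*b'+1)) / real (Suc a)) * (cos t ^ (a+2) * sin t ^ (2*b'+1)) + (-1 / real (Suc a)) * (real (Suc (2*b'+1)) * cos t ^ (a+2) * sin t ^ (2*b'+1) - real (Suc a) * cos t ^ a * sin t ^ (2*b'+1+2)))"
    using A B by (rule RepO_lin)
  then show ?case by (rule RepO_cong) (simp_all add: field_simps del: of_nat_Suc)
qed

lemma P2: "RepO (2*a' + 1 + b) (\<lambda>t. cos t ^ (2*a'+1) * sin t ^ b)"
proof (induction a' arbitrary: b)
  case 0
  have "RepO (0 + Suc b) (\<lambda>t. real (Suc b) * cos t * sin t ^ b)"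
    by (rule RepO_deriv[OF refl D3'])
  then have X: "RepO (b+1) (\<lambda>t. real (Suc b) * cos t * sin t ^ b)" by simp
  have "RepO (b+1) (\<lambda>t. (1 / real (Suc b)) * (real (Suc b) * cos t * sin t ^ b) + 0 * (real (Suc b) * cos t * sin t ^ b))"
    by (rule RepO_lin[OF X X])
  then show ?case by (rule RepO_cong) (simp_all add: field_simps del: of_nat_Suc)
next
  case (Suc a')
  have A: "RepO (2*Suc a' + 1 + b) (\<lambda>t. cos t ^ (2*a'+1) * sin t ^ (b+2))"
    using Suc.IH[of "b+2"] by (simp add: algebra_simps)
  have B: "RepO (2*Suc a' + 1 + b) (\<lambda>t. real (Suc b) * cos t ^ (2*a'+1+2) * sin t ^ b - real (Suc (2*a'+1)) * cos t ^ (2*a'+1) * sin t ^ (b+2))"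
    by (rule RepO_cong[OF RepO_deriv[OF refl D1[where a="2*a'+1" and b=b]]]) simp_all
  have "RepO (2*Suc a' + 1 + b) (\<lambda>t. (1 / real (Suc b)) * (real (Suc b) * cos t ^ (2*a'+1+2) * sin t ^ b - real (Suc (2*a'+1)) * cos t ^ (2*a'+1) * sin t ^ (b+2)) + (real (Suc (2*a'+1)) / real (Suc b)) * (cos t ^ (2*a'+1) * sin t ^ (b+2)))"
    using B A by (rule RepO_lin)
  then show ?case by (rule RepO_cong) (simp_all add: field_simps del: of_nat_Suc)
qed

lemma RepO_odd: "odd (a + b) \<Longrightarrow> RepO (a + b) (\<lambda>t. cos t ^ a * sin t ^ b)"
proof -
  assume o: "odd (a+b)"
  show ?thesis
  proof (cases "odd b")
    case True
    then obtain b' where "b = 2*b'+1" by (metis oddE)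
    then show ?thesis using P1[of a b'] by (simp add: algebra_simps)
  next
    case False
    then have "odd a" using o by auto
    then obtain a' where "a = 2*a'+1" by (metis oddE)
    then show ?thesis using P2[of a' b] by (simp add: algebra_simps)
  qed
qed

lemma Hd_shift: "Hd d \<kappa> (t + pi) = (-1) ^ d * Hd d \<kappa> t"
proof -
  have "Hd d \<kappa> (t + pi) = (\<Sum>j\<le>d. (-1) ^ d * (\<kappa> j * cos t ^ (d - j) * sin t ^ j))"
    unfolding Hd_def
  proof (rule sum.cong)
    fix j assume "j \<in> {..d}"
    then have "(-1::real) ^ (d - j) * (-1) ^ j = (-1) ^ d"
      by (simp add: power_add[symmetric])
    then show "\<kappa> j * cos (t + pi) ^ (d - j) * sin (t + pi) ^ j = (-1) ^ d * (\<kappa> j * cos t ^ (d - j) * sin t ^ j)"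
      by (simp add: power_minus[of "cos t"] power_minus[of "sin t"] algebra_simps)
  qed simp
  then show ?thesis by (simp add: Hd_def sum_distrib_left)
qed

lemma RepE_lin:
  assumes "RepE f" "RepE g"
  shows "RepE (\<lambda>t. x * f t + y * g t)"
proof -
  obtain c1 G1 where 1: "\<And>t. G1 (t + pi) = G1 t" "\<And>t. (G1 has_real_derivative (f t - c1)) (at t)"
    using assms(1) RepE_def by blast
  obtain c2 G2 where 2: "\<And>t. G2 (t + pi) = G2 t" "\<And>t. (G2 has_real_derivative (g t - c2)) (at t)"
    using assms(2) RepE_def by blast
  show ?thesis unfolding RepE_def
  proof (intro exI conjI allI)
    fix t
    show "x * G1 (t + pi) + y * G2 (t + pi) = x * G1 t + y * G2 t" using 1 2 by simp
    show "((\<lambda>t. x * G1 t + y * G2 t) has_real_derivative (x * f t + y * g t - (x * c1 + y * c2))) (at t)"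
      by (rule derivative_eq_intros 1 2 refl)+ (simp add: algebra_simps)
  qed
qed

lemma RepE_cong: "RepE f \<Longrightarrow> (\<And>t. g t = f t) \<Longrightarrow> RepE g"
proof -
  assume "RepE f" "\<And>t. g t = f t"
  then have "g = f" by auto
  then show ?thesis using \<open>RepE f\<close> by simp
qed

lemma RepE_const: "RepE (\<lambda>t. x)"
  unfolding RepE_def by (rule exI[of _ x], rule exI[of _ "\<lambda>t. 0"]) auto

lemma RepO_even: "even d \<Longrightarrow> RepO d f \<Longrightarrow> RepE f"
proof -
  assume e: "even d" and "RepO d f"
  then obtain \<kappa> where k: "\<And>t. (Hd d \<kappa> has_real_derivative f t) (at t)" using RepO_def by blast
  show ?thesis unfolding RepE_def
    by (rule exI[of _ 0], rule exI[of _ "Hd d \<kappa>"]) (use k e in \<open>auto simp: Hd_shift\<close>)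
qed

lemma E3: "RepE (\<lambda>t. cos t ^ (2*a'))"
proof (induction a')
  case 0
  then show ?case using RepE_const[of 1] by simp
next
  case (Suc a')
  have B: "RepO (Suc (2*a') + Suc 0) (\<lambda>t. real (Suc 0) * cos t ^ (2*a'+2) * sin t ^ 0 - real (Suc (2*a')) * cos t ^ (2*a') * sin t ^ (0+2))"
    by (rule RepO_deriv[OF refl D1])
  have B': "RepE (\<lambda>t. real (Suc 0) * cos t ^ (2*a'+2) * sin t ^ 0 - real (Suc (2*a')) * cos t ^ (2*a') * sin t ^ (0+2))"
    by (rule RepO_even[OF _ B]) simp
  have "RepE (\<lambda>t. (real (2*a'+1) / real (2*a'+2)) * cos t ^ (2*a') + (1 / real (2*a'+2)) * (real (Suc 0) * cos t ^ (2*a'+2) * sin t ^ 0 - real (Suc (2*a')) * cos t ^ (2*a') * sin t ^ (0+2)))"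
    using Suc.IH B' by (rule RepE_lin)
  then show ?case
  proof (rule RepE_cong)
    fix t :: real
    have s: "sin t ^ (0+2) = 1 - cos t ^ 2" using sin_squared_eq[of t] by (simp only: add_0)
    show "cos t ^ (2 * Suc a') = (real (2*a'+1) / real (2*a'+2)) * cos t ^ (2*a') + (1 / real (2*a'+2)) * (real (Suc 0) * cos t ^ (2*a'+2) * sin t ^ 0 - real (Suc (2*a')) * cos t ^ (2*a') * sin t ^ (0+2))"
    proof -
      define R where "R = real (2*a'+2)"
      have R: "R \<noteq> 0" "real (2*a'+1) = R - 1" "real (Suc (2*a')) = R - 1" unfolding R_def by auto
      show ?thesis unfolding s R_def[symmetric] R(2,3)
        using R(1) by (simp add: field_simps power_add power2_eq_square)
    qed
  qed
qed

lemma E2: "even a \<Longrightarrow> RepE (\<lambda>t. cos t ^ a * sin t ^ (2*b'))"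
proof (induction b' arbitrary: a)
  case 0
  then obtain a' where "a = 2*a'" by (metis evenE)
  then show ?case using E3[of a'] by simp
next
  case (Suc b')
  have A: "RepE (\<lambda>t. cos t ^ (a+2) * sin t ^ (2*b'))"
    using Suc.IH[of "a+2"] Suc.prems by simp
  have B: "RepO (Suc a + Suc (2*b')) (\<lambda>t. real (Suc (2*b')) * cos t ^ (a+2) * sin t ^ (2*b') - real (Suc a) * cos t ^ a * sin t ^ (2*b'+2))"
    by (rule RepO_deriv[OF refl D1])
  have B': "RepE (\<lambda>t. real (Suc (2*b')) * cos t ^ (a+2) * sin t ^ (2*b') - real (Suc a) * cos t ^ a * sin t ^ (2*b'+2))"
    by (rule RepO_even[OF _ B]) (use Suc.prems in simp)
  have "RepE (\<lambda>t. (real (Suc (2*b')) / real (Suc a)) * (cos t ^ (a+2) * sin t ^ (2*b')) + (-1 / real (Suc a)) * (real (Suc (2*b')) * cos t ^ (a+2) * sin t ^ (2*b') - real (Suc a) * cos t ^ a * sin t ^ (2*b'+2)))"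
    using A B' by (rule RepE_lin)
  then show ?case
  proof (rule RepE_cong)
    fix t :: real
    have r: "real (Suc a) \<noteq> 0" by simp
    show "cos t ^ a * sin t ^ (2 * Suc b') = (real (Suc (2*b')) / real (Suc a)) * (cos t ^ (a+2) * sin t ^ (2*b')) + (-1 / real (Suc a)) * (real (Suc (2*b')) * cos t ^ (a+2) * sin t ^ (2*b') - real (Suc a) * cos t ^ a * sin t ^ (2*b'+2))"
      using r by (simp add: field_simps del: of_nat_Suc)
  qed
qed

lemma RepE_even: "even (a + b) \<Longrightarrow> RepE (\<lambda>t. cos t ^ a * sin t ^ b)"
proof -
  assume e: "even (a+b)"
  show ?thesis
  proof (cases "odd b")
    case True
    then obtain b' where "b = 2*b'+1" by (metis oddE)
    then show ?thesis using P1[of a b'] RepO_even[of "a+b"] e by (simp add: algebra_simps)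
  next
    case False
    then obtain b' where "b = 2*b'" by (metis evenE)
    moreover have "even a" using e False by auto
    ultimately show ?thesis using E2 by simp
  qed
qed

definition J :: "nat \<Rightarrow> nat \<Rightarrow> real \<Rightarrow> real" where
  "J a b t0 = integral {0..pi} (\<lambda>s. cos (t0 - s) ^ a * sin (t0 - s) ^ b)"

lemma FTC_shift:
  assumes G: "\<And>t. (G has_real_derivative g t) (at t)"
  shows "((\<lambda>s. g (t0 - s)) has_integral (G t0 - G (t0 - pi))) {0..pi}"
proof -
  have d: "((\<lambda>s. - G (t0 - s)) has_vector_derivative g (t0 - s)) (at s within {0..pi})" for s
  proof -
    have "((\<lambda>s. G (t0 - s)) has_real_derivative g (t0 - s) * (-1)) (at s)"
      by (rule DERIV_chain2[OF G]) (auto intro!: derivative_eq_intros)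
    then have "((\<lambda>s. - G (t0 - s)) has_real_derivative g (t0 - s)) (at s)"
      using DERIV_minus by fastforce
    then show ?thesis
      by (simp add: has_real_derivative_iff_has_vector_derivative has_vector_derivative_at_within)
  qed
  have "((\<lambda>s. g (t0 - s)) has_integral ((- G (t0 - pi)) - (- G (t0 - 0)))) {0..pi}"
    by (rule fundamental_theorem_of_calculus) (use d in auto)
  then show ?thesis by simp
qed

lemma J_odd: "odd (a + b) \<Longrightarrow> \<exists>\<kappa>. \<forall>t0. J a b t0 = Hd (a + b) \<kappa> t0"
proof -
  assume o: "odd (a+b)"
  obtain \<kappa> where k: "\<And>t. (Hd (a+b) \<kappa> has_real_derivative cos t ^ a * sin t ^ b) (at t)"
    using RepO_odd[OF o] unfolding RepO_def by blast
  show ?thesis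
  proof (intro exI allI)
    fix t0
    have i: "((\<lambda>s. cos (t0 - s) ^ a * sin (t0 - s) ^ b) has_integral (Hd (a+b) \<kappa> t0 - Hd (a+b) \<kappa> (t0 - pi))) {0..pi}"
      using FTC_shift[of "Hd (a+b) \<kappa>" "\<lambda>t. cos t ^ a * sin t ^ b", OF k] by simp
    have "Hd (a+b) \<kappa> t0 = (-1) ^ (a+b) * Hd (a+b) \<kappa> (t0 - pi)"
      using Hd_shift[of "a+b" \<kappa> "t0 - pi"] by simp
    then have "Hd (a+b) \<kappa> (t0 - pi) = - Hd (a+b) \<kappa> t0" using o by simp
    then have "J a b t0 = 2 * Hd (a+b) \<kappa> t0" using i unfolding J_def by (simp add: integral_unique)
    also have "\<dots> = Hd (a+b) (\<lambda>j. 2 * \<kappa> j + 0 * \<kappa> j) t0" by (simp only: Hd_lin)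
    finally show "J a b t0 = Hd (a+b) (\<lambda>j. 2 * \<kappa> j + 0 * \<kappa> j) t0" .
  qed
qed

lemma J_even: "even (a + b) \<Longrightarrow> \<exists>C. \<forall>t0. J a b t0 = C"
proof -
  assume e: "even (a+b)"
  obtain c G where G: "\<And>t. G (t + pi) = G t" "\<And>t. (G has_real_derivative (cos t ^ a * sin t ^ b - c)) (at t)"
    using RepE_even[OF e] unfolding RepE_def by blast
  show ?thesis
  proof (intro exI allI)
    fix t0
    have i: "((\<lambda>s. cos (t0 - s) ^ a * sin (t0 - s) ^ b - c) has_integral (G t0 - G (t0 - pi))) {0..pi}"
      using FTC_shift[of G "\<lambda>t. cos t ^ a * sin t ^ b - c", OF G(2)] by simp
    have "G t0 = G (t0 - pi)" using G(1)[of "t0 - pi"] by simp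
    then have i2: "((\<lambda>s. cos (t0 - s) ^ a * sin (t0 - s) ^ b - c) has_integral 0) {0..pi}" using i by simp
    have "((\<lambda>s. (cos (t0 - s) ^ a * sin (t0 - s) ^ b - c) + c) has_integral (0 + c * pi)) {0..pi}"
      using has_integral_add[OF i2 has_integral_const_real[of c 0 pi]] by (simp add: mult.commute)
    then show "J a b t0 = c * pi" unfolding J_def by (simp add: integral_unique)
  qed
qed

lemma cw_arc_vd: "(cw_arc r t0 has_vector_derivative (r * sin (t0 - s), - (r * cos (t0 - s)))) (at s)"
proof -
  have 1: "((\<lambda>s. r * cos (t0 - s)) has_real_derivative r * sin (t0 - s)) (at s)"
    by (auto intro!: derivative_eq_intros)
  have 2: "((\<lambda>s. r * sin (t0 - s)) has_real_derivative - (r * cos (t0 - s))) (at s)"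
    by (auto intro!: derivative_eq_intros)
  show ?thesis unfolding cw_arc_def
    by (rule has_vector_derivative_Pair[OF 1[unfolded has_real_derivative_iff_has_vector_derivative] 2[unfolded has_real_derivative_iff_has_vector_derivative]])
qed

lemma cw_arc_vd': "vector_derivative (cw_arc r t0) (at s) = (r * sin (t0 - s), - (r * cos (t0 - s)))"
  by (rule vector_derivative_at[OF cw_arc_vd])

lemma cont_cs: "continuous_on {0..pi} (\<lambda>s. cos (t0 - s) ^ a * sin (t0 - s) ^ b)"
  by (intro continuous_intros)

lemma int_cs: "(\<lambda>s. cos (t0 - s) ^ a * sin (t0 - s) ^ b) integrable_on {0..pi}"
  by (rule integrable_continuous_real[OF cont_cs])

lemma ARC:
  "line_integral (poly2 n bp) (\<lambda>z. - poly2 n ap z) (cw_arc r t0) 0 pi =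
   (\<Sum>i\<le>n. \<Sum>j\<le>n-i. r ^ (i+j+1) * (bp i j * J i (Suc j) t0 + ap i j * J (Suc i) j t0))"
proof -
  define T where "T i j s = r ^ (i+j+1) * (bp i j * (cos (t0-s) ^ i * sin (t0-s) ^ Suc j) + ap i j * (cos (t0-s) ^ Suc i * sin (t0-s) ^ j))" for i j s
  have integrand: "poly2 n bp (cw_arc r t0 s) * fst (vector_derivative (cw_arc r t0) (at s))
      + (- poly2 n ap (cw_arc r t0 s)) * snd (vector_derivative (cw_arc r t0) (at s))
      = (\<Sum>i\<le>n. \<Sum>j\<le>n-i. T i j s)" for s
  proof -
    have "poly2 n bp (cw_arc r t0 s) * fst (vector_derivative (cw_arc r t0) (at s))
      + (- poly2 n ap (cw_arc r t0 s)) * snd (vector_derivative (cw_arc r t0) (at s))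
      = (\<Sum>i\<le>n. \<Sum>j\<le>n-i. bp i j * (r * cos (t0 - s)) ^ i * (r * sin (t0 - s)) ^ j * (r * sin (t0 - s)))
      + (\<Sum>i\<le>n. \<Sum>j\<le>n-i. ap i j * (r * cos (t0 - s)) ^ i * (r * sin (t0 - s)) ^ j * (r * cos (t0 - s)))"
      by (simp add: cw_arc_vd' poly2_def cw_arc_def sum_distrib_right)
    also have "\<dots> = (\<Sum>i\<le>n. \<Sum>j\<le>n-i. T i j s)"
      by (simp add: T_def sum.distrib[symmetric] power_mult_distrib power_add algebra_simps)
    finally show ?thesis .
  qed
  have intT: "(T i j) integrable_on {0..pi}" for i j
    unfolding T_def by (intro integrable_continuous_real continuous_intros)
  have "line_integral (poly2 n bp) (\<lambda>z. - poly2 n ap z) (cw_arc r t0) 0 pi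
      = integral {0..pi} (\<lambda>s. \<Sum>i\<le>n. \<Sum>j\<le>n-i. T i j s)"
    unfolding line_integral_def integrand ..
  also have "\<dots> = (\<Sum>i\<le>n. integral {0..pi} (\<lambda>s. \<Sum>j\<le>n-i. T i j s))"
    by (rule integral_sum) (auto intro!: integrable_sum intT)
  also have "\<dots> = (\<Sum>i\<le>n. \<Sum>j\<le>n-i. integral {0..pi} (T i j))"
    by (rule sum.cong[OF refl], rule integral_sum) (auto intro!: intT)
  also have "\<dots> = (\<Sum>i\<le>n. \<Sum>j\<le>n-i. r ^ (i+j+1) * (bp i j * J i (Suc j) t0 + ap i j * J (Suc i) j t0))"
  proof (intro sum.cong refl)
    fix i j
    show "integral {0..pi} (T i j) = r ^ (i+j+1) * (bp i j * J i (Suc j) t0 + ap i j * J (Suc i) j t0)"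
    proof -
      have "integral {0..pi} (T i j) = r ^ (i+j+1) * integral {0..pi} (\<lambda>s. bp i j * (cos (t0-s) ^ i * sin (t0-s) ^ Suc j) + ap i j * (cos (t0-s) ^ Suc i * sin (t0-s) ^ j))"
        unfolding T_def by (rule integral_mult_right)
      also have "integral {0..pi} (\<lambda>s. bp i j * (cos (t0-s) ^ i * sin (t0-s) ^ Suc j) + ap i j * (cos (t0-s) ^ Suc i * sin (t0-s) ^ j))
          = integral {0..pi} (\<lambda>s. bp i j * (cos (t0-s) ^ i * sin (t0-s) ^ Suc j)) + integral {0..pi} (\<lambda>s. ap i j * (cos (t0-s) ^ Suc i * sin (t0-s) ^ j))"
        by (rule integral_add[OF integrable_on_mult_right[OF int_cs] integrable_on_mult_right[OF int_cs]])
      finally show ?thesis unfolding J_def by simp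
    qed
  qed
  finally show ?thesis .
qed

definition bpE :: "nat \<Rightarrow> nat \<Rightarrow> nat \<Rightarrow> nat \<Rightarrow> real" where
  "bpE a b i j = (if Suc i = a \<and> j = b then real a / 2 else 0)"
definition apE :: "nat \<Rightarrow> nat \<Rightarrow> nat \<Rightarrow> nat \<Rightarrow> real" where
  "apE a b i j = (if i = a \<and> Suc j = b then - real b / 2 else 0)"

lemma poly2_single:
  assumes "i0 + j0 \<le> n"
  shows "poly2 n (\<lambda>i j. if i = i0 \<and> j = j0 then c else 0) (x, y) = c * x ^ i0 * y ^ j0"
proof -
  have inner: "(\<Sum>j\<le>n-i. (if i = i0 \<and> j = j0 then c else 0) * x ^ i * y ^ j) = (if i = i0 then c * x ^ i0 * y ^ j0 else 0)" if "i \<le> n" for i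
  proof (cases "i = i0")
    case True
    have "(\<Sum>j\<le>n-i. (if i = i0 \<and> j = j0 then c else 0) * x ^ i * y ^ j) = (\<Sum>j\<le>n-i. if j = j0 then c * x ^ i * y ^ j else 0)"
      using True by (intro sum.cong) auto
    also have "\<dots> = c * x ^ i0 * y ^ j0" using True assms by simp
    finally show ?thesis using True by simp
  next
    case False
    then show ?thesis by simp
  qed
  have "poly2 n (\<lambda>i j. if i = i0 \<and> j = j0 then c else 0) (x, y) = (\<Sum>i\<le>n. if i = i0 then c * x ^ i0 * y ^ j0 else 0)"
    unfolding poly2_def prod.case by (rule sum.cong[OF refl], rule inner) simp
  also have "\<dots> = c * x ^ i0 * y ^ j0" using assms by simp
  finally show ?thesis .
qed

lemma poly2_bpE:
  assumes "a + b \<le> n + 1"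
  shows "poly2 n (bpE a b) (x, y) = real a / 2 * x ^ (a - 1) * y ^ b"
proof (cases a)
  case 0
  then show ?thesis by (simp add: bpE_def poly2_def)
next
  case (Suc a')
  have e: "bpE a b = (\<lambda>i j. if i = a' \<and> j = b then real a / 2 else 0)"
    unfolding bpE_def Suc by auto
  show ?thesis unfolding e using Suc assms by (subst poly2_single) auto
qed

lemma poly2_apE:
  assumes "a + b \<le> n + 1"
  shows "poly2 n (apE a b) (x, y) = - real b / 2 * x ^ a * y ^ (b - 1)"
proof (cases b)
  case 0
  then show ?thesis by (simp add: apE_def poly2_def)
next
  case (Suc b')
  have e: "apE a b = (\<lambda>i j. if i = a \<and> j = b' then - real b / 2 else 0)"
    unfolding apE_def Suc by auto
  show ?thesis unfolding e using Suc assms by (subst poly2_single) auto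
qed

lemma EXACT:
  assumes "a + b \<le> n + 1"
  shows "line_integral (poly2 n (bpE a b)) (\<lambda>z. - poly2 n (apE a b) z) (cw_arc r t0) 0 pi
    = ((r * cos (t0 - pi)) ^ a * (r * sin (t0 - pi)) ^ b - (r * cos t0) ^ a * (r * sin t0) ^ b) / 2"
proof -
  define F where "F s = (r * cos (t0 - s)) ^ a * (r * sin (t0 - s)) ^ b / 2" for s
  have integrand: "poly2 n (bpE a b) (cw_arc r t0 s) * fst (vector_derivative (cw_arc r t0) (at s))
      + (- poly2 n (apE a b) (cw_arc r t0 s)) * snd (vector_derivative (cw_arc r t0) (at s))
      = real a / 2 * (r * cos (t0 - s)) ^ (a - 1) * (r * sin (t0 - s)) ^ b * (r * sin (t0 - s))
        + real b / 2 * (r * cos (t0 - s)) ^ a * (r * sin (t0 - s)) ^ (b - 1) * (- (r * cos (t0 - s)))" for s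
    by (simp add: cw_arc_vd' cw_arc_def poly2_bpE[OF assms] poly2_apE[OF assms])
  have d: "(F has_vector_derivative
        (real a / 2 * (r * cos (t0 - s)) ^ (a - 1) * (r * sin (t0 - s)) ^ b * (r * sin (t0 - s))
        + real b / 2 * (r * cos (t0 - s)) ^ a * (r * sin (t0 - s)) ^ (b - 1) * (- (r * cos (t0 - s)))))
        (at s within {0..pi})" for s
  proof -
    have "(F has_real_derivative
        (real a / 2 * (r * cos (t0 - s)) ^ (a - 1) * (r * sin (t0 - s)) ^ b * (r * sin (t0 - s))
        + real b / 2 * (r * cos (t0 - s)) ^ a * (r * sin (t0 - s)) ^ (b - 1) * (- (r * cos (t0 - s))))) (at s)"
      unfolding F_def[abs_def]
      apply (rule derivative_eq_intros refl)+ apply simp by (simp add: field_simps)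
    then show ?thesis
      by (simp add: has_real_derivative_iff_has_vector_derivative has_vector_derivative_at_within)
  qed
  have "line_integral (poly2 n (bpE a b)) (\<lambda>z. - poly2 n (apE a b) z) (cw_arc r t0) 0 pi = F pi - F 0"
    unfolding line_integral_def integrand
    by (rule integral_unique, rule fundamental_theorem_of_calculus) (use d in auto)
  then show ?thesis by (simp add: F_def diff_divide_distrib)
qed

definition Zf :: "nat \<Rightarrow> nat \<Rightarrow> nat" where
  "Zf k n = 2 * (n div 2) * k + n div 2 + 3 * k - 2 * k ^ 2"

lemma Zf_int:
  assumes "2 * k \<le> n"
  shows "int (Zf k n) = 2 * int (n div 2) * int k + int (n div 2) + 3 * int k - 2 * int k ^ 2"
proof -
  have "k \<le> n div 2" using assms by linarith
  then have "2 * k ^ 2 \<le> 2 * (n div 2) * k" by (simp add: power2_eq_square mult_right_mono)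
  then show ?thesis unfolding Zf_def by (simp add: of_nat_diff)
qed

lemma zexp_eq:
  assumes "m = 2 * k + 1" "2 * k \<le> n"
  shows "zexp m n = int (Zf k n)"
proof -
  have "(int m ^ 2 - 5 * int m + 4) = 2 * (2 * int k ^ 2 - 3 * int k)"
    using assms(1) by (simp add: power2_eq_square algebra_simps)
  then have "(int m ^ 2 - 5 * int m + 4) div 2 = 2 * int k ^ 2 - 3 * int k" by simp
  then show ?thesis unfolding zexp_def Zf_int[OF assms(2)] using assms(1)
    by (simp add: algebra_simps)
qed

lemma qexp_eq:
  assumes "m = 2 * k + 1" "2 * k \<le> n"
  shows "qexp m n = int (Zf k n) + 2"
proof -
  have "(int m ^ 2 - 5 * int m) = 2 * (2 * int k ^ 2 - 3 * int k - 2)"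
    using assms(1) by (simp add: power2_eq_square algebra_simps)
  then have "(int m ^ 2 - 5 * int m) div 2 = 2 * int k ^ 2 - 3 * int k - 2" by simp
  then show ?thesis unfolding qexp_def Zf_int[OF assms(2)] using assms(1)
    by (simp add: algebra_simps)
qed

lemma basis_eq:
  assumes "m = 2 * k + 1" "2 * k \<le> n"
  shows "basis m n =
     map (\<lambda>p. \<lambda>u::real. u ^ (2 * p + 1)) [0..<Zf k n + 1]
   @ concat (map (\<lambda>s. map (\<lambda>j. \<lambda>u::real. u ^ (2 * (Zf k n + 2 + s + j * k) + 1)) [0..<2 * s + 2]) [0..<k - 1])
   @ map (\<lambda>l. \<lambda>u::real. (u ^ 2 + u ^ (2 * m)) ^ (l + 1)) [0..<(n + 1) div 2]"
proof -
  have 1: "nat (zexp m n + 1) = Zf k n + 1" using zexp_eq[OF assms] by simp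
  have 2: "nat ((int m - 3) div 2) = k - 1" using assms(1) by simp
  have 3: "nat ((int n - 1) div 2 + 1) = (n + 1) div 2" by simp
  have 4: "nat (2 * qexp m n + 2 * int s + int j * (int m - 1) + 1) = 2 * (Zf k n + 2 + s + j * k) + 1" for s j
  proof -
    have "2 * qexp m n + 2 * int s + int j * (int m - 1) + 1 = int (2 * (Zf k n + 2 + s + j * k) + 1)"
      unfolding qexp_eq[OF assms] using assms(1) by (simp add: algebra_simps)
    then show ?thesis by (simp only: nat_int)
  qed
  show ?thesis unfolding basis_def 1 2 3 4 ..
qed

lemma comb1_int:
  fixes k K D j :: int
  assumes "0 \<le> k" "k \<le> K" "0 \<le> D" "D \<le> K" "0 \<le> j" "j \<le> 2*D+1"
    and "D + k*j > 2*K*k + K + 3*k - 2*k^2"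
  shows "j \<ge> 2*K - 2*k + 4 \<and> D \<ge> K - k + 2"
proof -
  have "j \<ge> 2*K - 2*k + 4"
  proof (rule ccontr)
    assume "\<not> ?thesis"
    then have "j \<le> 2*K - 2*k + 3" by simp
    then have "k*j \<le> k*(2*K - 2*k + 3)" using assms(1) by (rule mult_left_mono)
    then show False using assms(4,7) by (simp add: algebra_simps power2_eq_square)
  qed
  then show ?thesis using assms(6) by simp
qed

lemma comb1:
  assumes "2*k \<le> n" "D \<le> n div 2" "j \<le> 2*D+1"
  shows "D + k*j \<le> Zf k n \<or> (\<exists>s j'. s < k - 1 \<and> j' < 2 * s + 2 \<and> D + k*j = Zf k n + 2 + s + j'*k)"
proof (cases "D + k*j \<le> Zf k n")
  case True
  then show ?thesis by simp
next
  case False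
  define K where "K = n div 2"
  have kK: "k \<le> K" using assms(1) unfolding K_def by linarith
  have "Zf k n < D + k*j" using False by simp
  then have "int (Zf k n) < int D + int k * int j" by (metis of_nat_add of_nat_less_iff of_nat_mult)
  then have "int D + int k * int j > 2*int K*int k + int K + 3*int k - 2*int k^2"
    using Zf_int[OF assms(1)] unfolding K_def by simp
  then have c: "int j \<ge> 2*int K - 2*int k + 4 \<and> int D \<ge> int K - int k + 2"
    using comb1_int[of "int k" "int K" "int D" "int j"] kK assms(2,3) unfolding K_def by simp
  define s where "s = D + k - 2 - K"
  define j' where "j' = j + 2*k - 4 - 2*K"
  have si: "int s = int D + int k - 2 - int K" unfolding s_def using c by linarith
  have ji: "int j' = int j + 2*int k - 4 - 2*int K" unfolding j'_def using c by linarith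
  have "s < k - 1" using si assms(2) unfolding K_def by linarith
  moreover have "j' < 2 * s + 2" using si ji assms(3) by linarith
  moreover have "int (D + k*j) = int (Zf k n + 2 + s + j'*k)"
  proof -
    have "int j' * int k = int j * int k + 2 * int k * int k - 4 * int k - 2 * int K * int k"
      unfolding ji by (simp add: algebra_simps)
    then show ?thesis using si Zf_int[OF assms(1)] unfolding K_def
      by (simp add: algebra_simps power2_eq_square)
  qed
  then have "D + k*j = Zf k n + 2 + s + j'*k" by (simp only: of_nat_eq_iff)
  ultimately show ?thesis by blast
qed

lemma comb2a_int:
  fixes k K p :: int
  assumes "0 \<le> k" "k \<le> K" "0 \<le> p" "p \<le> 2*K*k + K + 3*k - 2*k^2"
  shows "\<exists>D j. 0 \<le> D \<and> D \<le> K \<and> 0 \<le> j \<and> j \<le> 2*D+1 \<and> p = D + k*j"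
proof (cases "p \<le> K")
  case True
  then show ?thesis using assms by (intro exI[of _ p] exI[of _ 0]) simp
next
  case False
  define b where "b = (2*p+1) div (2*k+1)"
  define \<rho> where "\<rho> = (2*p+1) mod (2*k+1)"
  define X where "X = k * b"
  have e: "(2*k+1)*b + \<rho> = 2*p+1" unfolding b_def \<rho>_def by (metis mult.commute div_mult_mod_eq)
  have \<rho>: "0 \<le> \<rho>" "\<rho> \<le> 2*k" unfolding \<rho>_def
    using assms(1) pos_mod_bound[of "2*k+1" "2*p+1"] pos_mod_sign[of "2*k+1" "2*p+1"] by linarith+
  have b0: "0 \<le> b" unfolding b_def using assms(1,3) by (simp add: pos_imp_zdiv_nonneg_iff)
  have e2: "2*X + b + \<rho> = 2*p+1" using e unfolding X_def by (simp add: algebra_simps)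
  have Xp: "X \<le> p"
  proof (cases "b \<le> 1")
    case True
    then have "X \<le> k * 1" unfolding X_def using assms(1) by (intro mult_left_mono) auto
    then show ?thesis using False assms(2) by simp
  next
    case False
    then show ?thesis using e2 \<rho> by linarith
  qed
  have bb: "b \<le> 2*K - 2*k + 3"
  proof (rule ccontr)
    assume "\<not> ?thesis"
    then have "b \<ge> 2*K - 2*k + 4" by simp
    then have "k * (2*K - 2*k + 4) \<le> X" unfolding X_def using assms(1) by (intro mult_left_mono) auto
    then show False using e2 \<rho> assms(4) \<open>b \<ge> 2*K - 2*k + 4\<close> by (simp add: algebra_simps power2_eq_square)
  qed
  have DK: "p - X \<le> K"
  proof (cases "b = 2*K - 2*k + 3")
    case True
    then have "X = k * (2*K - 2*k + 3)" unfolding X_def by simp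
    then show ?thesis using e2 \<rho> assms(4) True by (simp add: algebra_simps power2_eq_square)
  next
    case False
    then show ?thesis using e2 \<rho> bb by linarith
  qed
  show ?thesis
    by (rule exI[of _ "p - X"], rule exI[of _ b]) (use Xp DK b0 e2 \<rho> in \<open>auto simp: X_def\<close>)
qed

lemma comb2a:
  assumes "2*k \<le> n" "p \<le> Zf k n"
  shows "\<exists>D j. D \<le> n div 2 \<and> j \<le> 2*D+1 \<and> p = D + k*j"
proof -
  have kK: "int k \<le> int (n div 2)" using assms(1) by linarith
  have "int p \<le> 2*int (n div 2)*int k + int (n div 2) + 3*int k - 2*int k^2"
    using assms(2) Zf_int[OF assms(1)] by linarith
  then obtain D j :: int where Dj: "0 \<le> D" "D \<le> int (n div 2)" "0 \<le> j" "j \<le> 2*D+1" "int p = D + int k*j"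
    using comb2a_int[of "int k" "int (n div 2)" "int p"] kK by auto
  show ?thesis
  proof (intro exI conjI)
    show "nat D \<le> n div 2" using Dj by linarith
    show "nat j \<le> 2 * nat D + 1" using Dj by linarith
    have "int p = int (nat D + k * nat j)" using Dj by simp
    then show "p = nat D + k * nat j" by (simp only: of_nat_eq_iff)
  qed
qed

lemma comb2b:
  assumes "2*k \<le> n" "s < k - 1" "j' < 2 * s + 2"
  shows "\<exists>D j. D \<le> n div 2 \<and> j \<le> 2*D+1 \<and> Zf k n + 2 + s + j'*k = D + k*j"
proof -
  define K where "K = n div 2"
  have kK: "k \<le> K" using assms(1) unfolding K_def by linarith
  show ?thesis
  proof (intro exI conjI)
    show "K - k + 2 + s \<le> n div 2" using assms(2) kK unfolding K_def by linarith
    show "j' + 2*K - 2*k + 4 \<le> 2 * (K - k + 2 + s) + 1" using assms(3) kK by arith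
    have "int (Zf k n + 2 + s + j'*k) = int (K - k + 2 + s + k * (j' + 2*K - 2*k + 4))"
    proof -
      have a: "int (K - k + 2 + s) = int K - int k + 2 + int s" using kK by linarith
      have b: "int (j' + 2*K - 2*k + 4) = int j' + 2*int K - 2*int k + 4" using kK by linarith
      have "int (K - k + 2 + s + k * (j' + 2*K - 2*k + 4)) = int K - int k + 2 + int s + int k * (int j' + 2*int K - 2*int k + 4)"
        using kK by (simp add: of_nat_diff)
      then show ?thesis using Zf_int[OF assms(1)] unfolding K_def
        by (simp add: algebra_simps power2_eq_square)
    qed
    then show "Zf k n + 2 + s + j'*k = K - k + 2 + s + k * (j' + 2*K - 2*k + 4)" by (simp only: of_nat_eq_iff)
  qed
qed

lemma in_map_I: "p \<in> set xs \<Longrightarrow> x = F p \<Longrightarrow> x \<in> set (map F xs)" by auto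
lemma in_concat_I: "s \<in> set xs \<Longrightarrow> x \<in> set (F s) \<Longrightarrow> x \<in> set (concat (map F xs))" by auto
lemma in_app1: "x \<in> set A \<Longrightarrow> x \<in> set (A @ B @ C)" by auto
lemma in_app2: "x \<in> set B \<Longrightarrow> x \<in> set (A @ B @ C)" by auto
lemma in_app3: "x \<in> set C \<Longrightarrow> x \<in> set (A @ B @ C)" by auto
lemma in_map_E: "x \<in> set (map F xs) \<Longrightarrow> \<exists>p. p \<in> set xs \<and> x = F p" by auto
lemma in_concat_E: "x \<in> set (concat (map F xs)) \<Longrightarrow> \<exists>s. s \<in> set xs \<and> x \<in> set (F s)" by auto
lemma in_app_E: "x \<in> set (A @ B @ C) \<Longrightarrow> x \<in> set A \<or> x \<in> set B \<or> x \<in> set C" by auto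

lemma mem_odd:
  assumes "m = 2*k+1" "2*k \<le> n" "D \<le> n div 2" "j \<le> 2*D+1"
  shows "(\<lambda>u::real. u ^ (2*(D + k*j)+1)) \<in> set (basis m n)"
proof -
  from comb1[OF assms(2-4)]
  show ?thesis
  proof
    assume a: "D + k*j \<le> Zf k n"
    show ?thesis unfolding basis_eq[OF assms(1,2)]
      by (rule in_app1, rule in_map_I[where p="D + k*j"]) (use a in auto)
  next
    assume "\<exists>s j'. s < k - 1 \<and> j' < 2 * s + 2 \<and> D + k*j = Zf k n + 2 + s + j'*k"
    then obtain s j' where sj: "s < k - 1" "j' < 2 * s + 2" "D + k*j = Zf k n + 2 + s + j'*k" by blast
    show ?thesis unfolding basis_eq[OF assms(1,2)]
      apply (rule in_app2, rule in_concat_I[where s=s], use sj(1) in simp)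
      apply (rule in_map_I[where p=j'], unfold set_upt, use sj(2) in simp)
      apply (simp only: sj(3))
      done
  qed
qed

lemma mem_even:
  assumes "m = 2*k+1" "2*k \<le> n" "1 \<le> e" "2*e \<le> n+1"
  shows "(\<lambda>u::real. (u^2 + u^(2*m)) ^ e) \<in> set (basis m n)"
proof -
  have e: "e = (e - 1) + 1" using assms(3) by simp
  show ?thesis unfolding basis_eq[OF assms(1,2)]
    apply (rule in_app3, rule in_map_I[where p="e - 1"], use assms(3,4) in simp)
    apply (subst e, simp only: add_diff_cancel_right')
    done
qed

lemma basis_cases:
  assumes "m = 2*k+1" "2*k \<le> n" "f \<in> set (basis m n)"
  shows "(\<exists>D j. D \<le> n div 2 \<and> j \<le> 2*D+1 \<and> f = (\<lambda>u. u ^ (2*(D + k*j)+1)))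
       \<or> (\<exists>e. 1 \<le> e \<and> 2*e \<le> n+1 \<and> f = (\<lambda>u. (u^2 + u^(2*m)) ^ e))"
proof -
  from in_app_E[OF assms(3)[unfolded basis_eq[OF assms(1,2)]]]
  show ?thesis
  proof (elim disjE)
    assume "f \<in> set (map (\<lambda>p. \<lambda>u::real. u ^ (2 * p + 1)) [0..<Zf k n + 1])"
    then obtain p where p: "p \<in> set [0..<Zf k n + 1]" "f = (\<lambda>u::real. u ^ (2 * p + 1))"
      by (blast dest: in_map_E)
    obtain D j where Dj: "D \<le> n div 2" "j \<le> 2*D+1" "p = D + k*j" using comb2a[OF assms(2), of p] p(1) by auto
    have "f = (\<lambda>u::real. u ^ (2*(D + k*j)+1))" unfolding p(2) Dj(3) ..
    then show ?thesis using Dj(1,2) by blast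
  next
    assume "f \<in> set (concat (map (\<lambda>s. map (\<lambda>j. \<lambda>u::real. u ^ (2 * (Zf k n + 2 + s + j * k) + 1)) [0..<2 * s + 2]) [0..<k - 1]))"
    then obtain s where s: "s \<in> set [0..<k-1]" "f \<in> set (map (\<lambda>j. \<lambda>u::real. u ^ (2 * (Zf k n + 2 + s + j * k) + 1)) [0..<2 * s + 2])"
      by (blast dest: in_concat_E)
    then obtain j' where j': "j' \<in> set [0..<2 * s + 2]" "f = (\<lambda>u::real. u ^ (2 * (Zf k n + 2 + s + j' * k) + 1))"
      by (blast dest: in_map_E)
    obtain D j where Dj: "D \<le> n div 2" "j \<le> 2*D+1" "Zf k n + 2 + s + j' * k = D + k*j"
      using comb2b[OF assms(2), of s j'] s(1) j'(1) by auto
    have "f = (\<lambda>u::real. u ^ (2*(D + k*j)+1))" unfolding j'(2) Dj(3) ..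
    then show ?thesis using Dj(1,2) by blast
  next
    assume "f \<in> set (map (\<lambda>l. \<lambda>u::real. (u ^ 2 + u ^ (2 * m)) ^ (l + 1)) [0..<(n + 1) div 2])"
    then obtain l where l: "l \<in> set [0..<(n + 1) div 2]" "f = (\<lambda>u::real. (u ^ 2 + u ^ (2 * m)) ^ (l + 1))"
      by (blast dest: in_map_E)
    have "1 \<le> l + 1" "2*(l+1) \<le> n+1" using l(1) by auto
    then show ?thesis using l(2) by blast
  qed
qed

definition inspan :: "nat \<Rightarrow> nat \<Rightarrow> (real \<Rightarrow> real) \<Rightarrow> bool" where
  "inspan m n f \<longleftrightarrow> (\<exists>c. \<forall>u>0. f u = (\<Sum>i<length (basis m n). c i * (basis m n ! i) u))"

lemma inspan_add: "inspan m n f \<Longrightarrow> inspan m n g \<Longrightarrow> inspan m n (\<lambda>u. f u + g u)"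
proof -
  assume "inspan m n f" "inspan m n g"
  then obtain c1 c2 where c1: "\<forall>u>0. f u = (\<Sum>i<length (basis m n). c1 i * (basis m n ! i) u)"
    and c2: "\<forall>u>0. g u = (\<Sum>i<length (basis m n). c2 i * (basis m n ! i) u)"
    unfolding inspan_def by blast
  show ?thesis unfolding inspan_def
    by (rule exI[of _ "\<lambda>i. c1 i + c2 i"]) (simp add: c1 c2 sum.distrib distrib_right)
qed

lemma inspan_scale: "inspan m n f \<Longrightarrow> inspan m n (\<lambda>u. a * f u)"
proof -
  assume "inspan m n f"
  then obtain c1 where c1: "\<forall>u>0. f u = (\<Sum>i<length (basis m n). c1 i * (basis m n ! i) u)"
    unfolding inspan_def by blast
  show ?thesis unfolding inspan_def
    by (rule exI[of _ "\<lambda>i. a * c1 i"]) (simp add: c1 sum_distrib_left mult.assoc)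
qed

lemma inspan_zero: "inspan m n (\<lambda>u. 0)"
  unfolding inspan_def by (rule exI[of _ "\<lambda>i. 0"]) simp

lemma inspan_sum: "finite A \<Longrightarrow> (\<And>x. x \<in> A \<Longrightarrow> inspan m n (f x)) \<Longrightarrow> inspan m n (\<lambda>u. \<Sum>x\<in>A. f x u)"
proof (induction A rule: finite_induct)
  case empty
  then show ?case using inspan_zero by simp
next
  case (insert x F)
  then show ?case using inspan_add[of m n "f x" "\<lambda>u. \<Sum>x\<in>F. f x u"] by simp
qed

lemma inspan_cong: "inspan m n f \<Longrightarrow> (\<And>u. u > 0 \<Longrightarrow> g u = f u) \<Longrightarrow> inspan m n g"
  unfolding inspan_def by auto

lemma inspan_basis: "f \<in> set (basis m n) \<Longrightarrow> inspan m n f"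
proof -
  assume "f \<in> set (basis m n)"
  then obtain i0 where i0: "i0 < length (basis m n)" "basis m n ! i0 = f" by (auto simp: in_set_conv_nth)
  show ?thesis unfolding inspan_def
  proof (intro exI[of _ "\<lambda>i. if i = i0 then 1 else 0"] allI impI)
    fix u :: real
    have "(\<Sum>i<length (basis m n). (if i = i0 then 1 else 0) * (basis m n ! i) u)
        = (\<Sum>i<length (basis m n). if i = i0 then (basis m n ! i) u else 0)"
      by (intro sum.cong) auto
    also have "\<dots> = f u" using i0 by simp
    finally show "f u = (\<Sum>i<length (basis m n). (if i = i0 then 1 else 0) * (basis m n ! i) u)" by simp
  qed
qed

lemma u_of_eq:
  assumes "0 < u" "1 \<le> m"
  shows "u_of m (u^2 + u^(2*m)) = u"
  unfolding u_of_def
proof (rule the_equality)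
  show "0 < u \<and> u^2 + u^(2*m) = u^2 + u^(2*m)" using assms by simp
next
  fix v :: real
  assume v: "0 < v \<and> v^2 + v^(2*m) = u^2 + u^(2*m)"
  have pm: "0 < 2*m" using assms by simp
  show "v = u"
  proof (rule linorder_cases[of v u])
    assume "v < u"
    then have "v^2 < u^2" "v^(2*m) < u^(2*m)" using v pm by (auto intro!: power_strict_mono)
    then show ?thesis using v by simp
  next
    assume "u < v"
    then have "u^2 < v^2" "u^(2*m) < v^(2*m)" using assms pm by (auto intro!: power_strict_mono)
    then show ?thesis using v by simp
  qed
qed

definition Rf :: "nat \<Rightarrow> real \<Rightarrow> real" where "Rf m u = sqrt (u^2 + u^(2*m))"
definition Af :: "nat \<Rightarrow> real \<Rightarrow> real" where "Af m u = arctan (u^m / u)"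

lemma Rf_cos_sin:
  assumes "0 < u"
  shows "Rf m u * cos (Af m u) = u" "Rf m u * sin (Af m u) = u ^ m"
proof -
  define x where "x = u^m / u"
  have ux: "u * x = u^m" unfolding x_def using assms by simp
  have h: "u^2 + u^(2*m) = u^2 * (1 + x^2)"
  proof -
    have "u^(2*m) = (u * x)^2" unfolding ux by (simp add: power_mult[symmetric] mult.commute)
    then show ?thesis by (simp add: power_mult_distrib algebra_simps)
  qed
  have s: "sqrt (u^2 + u^(2*m)) = u * sqrt (1 + x^2)"
    unfolding h real_sqrt_mult using assms by simp
  have p: "sqrt (1 + x^2) > 0" by (simp add: add_pos_nonneg)
  show "Rf m u * cos (Af m u) = u" unfolding Rf_def Af_def x_def[symmetric] s cos_arctan using p by simp
  show "Rf m u * sin (Af m u) = u ^ m" unfolding Rf_def Af_def x_def[symmetric] s sin_arctan using p ux by simp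
qed

lemma MEL:
  assumes "0 < u" "1 \<le> m"
  shows "melnikov m n ap bp am bm (u^2 + u^(2*m)) =
    (\<Sum>i\<le>n. \<Sum>j\<le>n-i. Rf m u ^ (i+j+1) * (bp i j * J i (Suc j) (Af m u + pi) + ap i j * J (Suc i) j (Af m u + pi)))
  + (\<Sum>i\<le>n. \<Sum>j\<le>n-i. Rf m u ^ (i+j+1) * (bm i j * J i (Suc j) (Af m u) + am i j * J (Suc i) j (Af m u)))"
  unfolding melnikov_def Let_def u_of_eq[OF assms] ARC Rf_def[symmetric] Af_def[symmetric] ..

lemma key_odd0:
  assumes "m = 2*k+1" "2*k \<le> n" "odd (a+b)" "a+b \<le> n+1"
  shows "inspan m n (\<lambda>u. Rf m u ^ (a+b) * J a b (Af m u))"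
proof -
  define d where "d = a + b"
  obtain \<kappa> where k: "\<And>t. J a b t = Hd d \<kappa> t" using J_odd[OF assms(3)] unfolding d_def by blast
  obtain D where D: "d = 2*D+1" using assms(3) unfolding d_def by (metis oddE)
  have DK: "D \<le> n div 2" using D assms(4) unfolding d_def by linarith
  have "inspan m n (\<lambda>u. \<Sum>j\<le>d. \<kappa> j * u ^ (2*(D + k*j)+1))"
  proof (rule inspan_sum)
    fix j assume "j \<in> {..d}"
    then have "j \<le> 2*D+1" using D by simp
    then show "inspan m n (\<lambda>u. \<kappa> j * u ^ (2*(D + k*j)+1))"
      by (intro inspan_scale inspan_basis mem_odd[OF assms(1,2) DK])
  qed simp
  then show ?thesis
  proof (rule inspan_cong)
    fix u :: real assume u: "0 < u"
    have "Rf m u ^ (a+b) * J a b (Af m u) = (\<Sum>j\<le>d. \<kappa> j * (Rf m u * cos (Af m u)) ^ (d - j) * (Rf m u * sin (Af m u)) ^ j)"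
      unfolding k Hd_def d_def[symmetric] sum_distrib_left
    proof (rule sum.cong[OF refl])
      fix j assume "j \<in> {..d}"
      then have "Rf m u ^ d = Rf m u ^ (d - j) * Rf m u ^ j" by (simp add: power_add[symmetric])
      then show "Rf m u ^ d * (\<kappa> j * cos (Af m u) ^ (d - j) * sin (Af m u) ^ j) = \<kappa> j * (Rf m u * cos (Af m u)) ^ (d - j) * (Rf m u * sin (Af m u)) ^ j"
        by (simp add: power_mult_distrib)
    qed
    also have "\<dots> = (\<Sum>j\<le>d. \<kappa> j * u ^ (2*(D + k*j)+1))"
    proof (rule sum.cong[OF refl])
      fix j assume "j \<in> {..d}"
      then have "d - j + m * j = 2*(D + k*j)+1" using D assms(1) by (simp add: algebra_simps)
      then show "\<kappa> j * (Rf m u * cos (Af m u)) ^ (d - j) * (Rf m u * sin (Af m u)) ^ j = \<kappa> j * u ^ (2*(D + k*j)+1)"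
        unfolding Rf_cos_sin[OF u] by (metis mult.assoc power_add power_mult)
    qed
    finally show "Rf m u ^ (a+b) * J a b (Af m u) = (\<Sum>j\<le>d. \<kappa> j * u ^ (2*(D + k*j)+1))" .
  qed
qed

lemma key_odd:
  assumes "m = 2*k+1" "2*k \<le> n" "odd (a+b)" "a+b \<le> n+1"
  shows "inspan m n (\<lambda>u. Rf m u ^ (a+b) * J a b (Af m u))"
    "inspan m n (\<lambda>u. Rf m u ^ (a+b) * J a b (Af m u + pi))"
proof -
  show 1: "inspan m n (\<lambda>u. Rf m u ^ (a+b) * J a b (Af m u))" by (rule key_odd0[OF assms])
  obtain \<kappa> where k: "\<And>t. J a b t = Hd (a+b) \<kappa> t" using J_odd[OF assms(3)] by blast
  have "J a b (t + pi) = - J a b t" for t unfolding k Hd_shift using assms(3) by simp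
  then show "inspan m n (\<lambda>u. Rf m u ^ (a+b) * J a b (Af m u + pi))"
    using inspan_scale[OF 1, of "-1"] by simp
qed

lemma key_even:
  assumes "m = 2*k+1" "2*k \<le> n" "even (a+b)" "a+b \<le> n+1" "1 \<le> a+b"
  shows "inspan m n (\<lambda>u. Rf m u ^ (a+b) * J a b (t u))"
proof -
  obtain C where C: "\<And>t. J a b t = C" using J_even[OF assms(3)] by blast
  obtain e where e: "a + b = 2*e" using assms(3) by (metis evenE)
  have "inspan m n (\<lambda>u. C * (u^2 + u^(2*m)) ^ e)"
    by (intro inspan_scale inspan_basis mem_even[OF assms(1,2)]) (use e assms(4,5) in auto)
  then show ?thesis
  proof (rule inspan_cong)
    fix u :: real assume u: "0 < u"
    have "Rf m u ^ (a+b) = (u^2 + u^(2*m)) ^ e"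
      unfolding e Rf_def power_mult by (simp add: add_nonneg_nonneg)
    then show "Rf m u ^ (a+b) * J a b (t u) = C * (u^2 + u^(2*m)) ^ e" unfolding C by simp
  qed
qed

lemma key:
  assumes "m = 2*k+1" "2*k \<le> n" "a+b \<le> n+1" "1 \<le> a+b"
  shows "inspan m n (\<lambda>u. Rf m u ^ (a+b) * J a b (Af m u))"
    "inspan m n (\<lambda>u. Rf m u ^ (a+b) * J a b (Af m u + pi))"
proof -
  have "inspan m n (\<lambda>u. Rf m u ^ (a+b) * J a b (Af m u)) \<and> inspan m n (\<lambda>u. Rf m u ^ (a+b) * J a b (Af m u + pi))"
  proof (cases "odd (a+b)")
    case True
    then show ?thesis using key_odd[OF assms(1,2) True assms(3)] by blast
  next
    case False
    then show ?thesis using key_even[OF assms(1,2) _ assms(3,4), of "\<lambda>u. Af m u"] key_even[OF assms(1,2) _ assms(3,4), of "\<lambda>u. Af m u + pi"] by simp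
  qed
  then show "inspan m n (\<lambda>u. Rf m u ^ (a+b) * J a b (Af m u))" "inspan m n (\<lambda>u. Rf m u ^ (a+b) * J a b (Af m u + pi))" by blast+
qed

lemma part1:
  assumes "m = 2*k+1" "2*k \<le> n"
  shows "inspan m n (\<lambda>u. melnikov m n ap bp am bm (u^2 + u^(2*m)))"
proof -
  have trm: "inspan m n (\<lambda>u. Rf m u ^ (i+j+1) * (b0 * J i (Suc j) (T u) + a0 * J (Suc i) j (T u)))"
    if "i + j \<le> n" "T = (\<lambda>u. Af m u) \<or> T = (\<lambda>u. Af m u + pi)" for i j b0 a0 T
  proof -
    have 1: "inspan m n (\<lambda>u. Rf m u ^ (i + Suc j) * J i (Suc j) (T u))"
      using key[OF assms, of i "Suc j"] that by auto
    have 2: "inspan m n (\<lambda>u. Rf m u ^ (Suc i + j) * J (Suc i) j (T u))"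
      using key[OF assms, of "Suc i" j] that by auto
    have "inspan m n (\<lambda>u. b0 * (Rf m u ^ (i + Suc j) * J i (Suc j) (T u)) + a0 * (Rf m u ^ (Suc i + j) * J (Suc i) j (T u)))"
      by (intro inspan_add inspan_scale 1 2)
    then show ?thesis by (rule inspan_cong) (simp add: algebra_simps)
  qed
  have m1: "1 \<le> m" using assms(1) by simp
  have "inspan m n (\<lambda>u.
    (\<Sum>i\<le>n. \<Sum>j\<le>n-i. Rf m u ^ (i+j+1) * (bp i j * J i (Suc j) (Af m u + pi) + ap i j * J (Suc i) j (Af m u + pi)))
  + (\<Sum>i\<le>n. \<Sum>j\<le>n-i. Rf m u ^ (i+j+1) * (bm i j * J i (Suc j) (Af m u) + am i j * J (Suc i) j (Af m u))))"
    by (intro inspan_add inspan_sum finite_atMost trm[where T="\<lambda>u. Af m u + pi"] trm[where T="\<lambda>u. Af m u"]) auto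
  then show ?thesis
    by (rule inspan_cong) (rule MEL[OF _ m1])
qed

definition realizable :: "nat \<Rightarrow> nat \<Rightarrow> (real \<Rightarrow> real) \<Rightarrow> bool" where
  "realizable m n f \<longleftrightarrow> (\<exists>ap bp am bm. \<forall>u>0. melnikov m n ap bp am bm (u^2 + u^(2*m)) = f u)"

lemma real_add:
  assumes "1 \<le> m" "realizable m n f" "realizable m n g"
  shows "realizable m n (\<lambda>u. f u + g u)"
proof -
  obtain ap1 bp1 am1 bm1 where 1: "\<And>u. u > 0 \<Longrightarrow> melnikov m n ap1 bp1 am1 bm1 (u^2 + u^(2*m)) = f u"
    using assms(2) unfolding realizable_def by blast
  obtain ap2 bp2 am2 bm2 where 2: "\<And>u. u > 0 \<Longrightarrow> melnikov m n ap2 bp2 am2 bm2 (u^2 + u^(2*m)) = g u"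
    using assms(3) unfolding realizable_def by blast
  show ?thesis unfolding realizable_def
  proof (intro exI allI impI)
    fix u :: real assume u: "u > 0"
    show "melnikov m n (\<lambda>i j. ap1 i j + ap2 i j) (\<lambda>i j. bp1 i j + bp2 i j) (\<lambda>i j. am1 i j + am2 i j) (\<lambda>i j. bm1 i j + bm2 i j) (u^2 + u^(2*m)) = f u + g u"
      unfolding 1[OF u, symmetric] 2[OF u, symmetric] MEL[OF u assms(1)]
      by (simp add: distrib_left distrib_right sum.distrib)
  qed
qed

lemma real_scale:
  assumes "1 \<le> m" "realizable m n f"
  shows "realizable m n (\<lambda>u. a * f u)"
proof -
  obtain ap1 bp1 am1 bm1 where 1: "\<And>u. u > 0 \<Longrightarrow> melnikov m n ap1 bp1 am1 bm1 (u^2 + u^(2*m)) = f u"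
    using assms(2) unfolding realizable_def by blast
  show ?thesis unfolding realizable_def
  proof (intro exI allI impI)
    fix u :: real assume u: "u > 0"
    show "melnikov m n (\<lambda>i j. a * ap1 i j) (\<lambda>i j. a * bp1 i j) (\<lambda>i j. a * am1 i j) (\<lambda>i j. a * bm1 i j) (u^2 + u^(2*m)) = a * f u"
      unfolding 1[OF u, symmetric] MEL[OF u assms(1)]
      by (simp add: distrib_left sum_distrib_left algebra_simps)
  qed
qed

lemma real_zero:
  assumes "1 \<le> m"
  shows "realizable m n (\<lambda>u. 0)"
  unfolding realizable_def
  by (rule exI[of _ "\<lambda>i j. 0"])+ (simp add: MEL[OF _ assms])

lemma real_sum:
  assumes "1 \<le> m"
  shows "finite A \<Longrightarrow> (\<And>x. x \<in> A \<Longrightarrow> realizable m n (f x)) \<Longrightarrow> realizable m n (\<lambda>u. \<Sum>x\<in>A. f x u)"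
proof (induction A rule: finite_induct)
  case empty
  then show ?case using real_zero[OF assms] by simp
next
  case (insert x F)
  then show ?case using real_add[OF assms, of n "f x" "\<lambda>u. \<Sum>x\<in>F. f x u"] by simp
qed

lemma sum2_single:
  assumes "i0 + j0 \<le> (n::nat)"
  shows "(\<Sum>i\<le>n. \<Sum>j\<le>n-i. if i = i0 \<and> j = j0 then X else 0) = (X::real)"
proof -
  have "(\<Sum>i\<le>n. \<Sum>j\<le>n-i. if i = i0 \<and> j = j0 then X else 0) = (\<Sum>i\<le>n. if i = i0 then X else 0)"
  proof (rule sum.cong[OF refl])
    fix i assume "i \<in> {..n}"
    show "(\<Sum>j\<le>n-i. if i = i0 \<and> j = j0 then X else 0) = (if i = i0 then X else 0)"
      using assms by (cases "i = i0") auto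
  qed
  also have "\<dots> = X" using assms by simp
  finally show ?thesis .
qed

lemma J_even_pos: "J (2*e) 0 0 \<noteq> 0"
proof
  assume J0: "J (2*e) 0 0 = 0"
  define f where "f s = cos (0 - s) ^ (2*e) * sin (0 - s) ^ 0" for s :: real
  have cf: "continuous_on {0..pi} f" unfolding f_def by (intro continuous_intros)
  have "(f has_integral 0) {0..pi}"
    using J0 integrable_integral[OF integrable_continuous_real[OF cf]] unfolding J_def f_def by simp
  have cb: "cbox 0 pi = {0..pi::real}" by (simp add: cbox_interval)
  have "f 0 = 0"
  proof (rule has_integral_0_cbox_imp_0[of 0 pi f])
    show "continuous_on (cbox 0 pi) f" using cf cb by simp
    show "0 \<le> f x" for x unfolding f_def by (simp add: zero_le_even_power)
    show "(f has_integral 0) (cbox 0 pi)" using \<open>(f has_integral 0) {0..pi}\<close> cb by simp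
    show "box 0 pi \<noteq> {}" by (simp add: box_real) (use pi_gt_zero in linarith)
    show "(0::real) \<in> cbox 0 pi" using cb pi_gt_zero by simp
  qed
  then show False unfolding f_def by simp
qed

lemma realize_basis:
  assumes "m = 2*k+1" "2*k \<le> n" "f \<in> set (basis m n)"
  shows "realizable m n f"
proof -
  have m1: "1 \<le> m" using assms(1) by simp
  from basis_cases[OF assms]
  show ?thesis
  proof (elim disjE exE conjE)
    fix D j assume D: "D \<le> n div 2" and j: "j \<le> 2*D+1" and f: "f = (\<lambda>u. u ^ (2*(D + k*j)+1))"
    define a where "a = 2*D+1-j"
    have ab: "a + j \<le> n + 1" "odd (a + j)" unfolding a_def using D j by auto
    show ?thesis unfolding realizable_def
    proof (intro exI allI impI)
      fix u :: real assume u: "u > 0"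
      have z: "line_integral (poly2 n (\<lambda>i j. 0)) (\<lambda>z. - poly2 n (\<lambda>i j. 0) z) (cw_arc r t) 0 pi = 0" for r t
        unfolding ARC by simp
      have "melnikov m n (apE a j) (bpE a j) (\<lambda>i j. 0) (\<lambda>i j. 0) (u^2 + u^(2*m))
          = ((Rf m u * cos (Af m u + pi - pi)) ^ a * (Rf m u * sin (Af m u + pi - pi)) ^ j
             - (Rf m u * cos (Af m u + pi)) ^ a * (Rf m u * sin (Af m u + pi)) ^ j) / 2"
        unfolding melnikov_def Let_def u_of_eq[OF u m1] Rf_def[symmetric] Af_def[symmetric] EXACT[OF ab(1)] z
        by simp
      also have "\<dots> = (u ^ a * (u^m) ^ j - (-u) ^ a * (- (u^m)) ^ j) / 2"
        using Rf_cos_sin[OF u, of m] by simp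
      also have "\<dots> = u ^ a * (u^m) ^ j"
      proof -
        have "(-u) ^ a * (- (u^m)) ^ j = (-1) ^ (a + j) * (u ^ a * (u^m) ^ j)"
          by (simp add: power_minus[of u] power_minus[of "u^m"] power_add)
        then show ?thesis using ab(2) by simp
      qed
      also have "\<dots> = f u"
      proof -
        have "a + m * j = 2*(D + k*j)+1" unfolding a_def using j assms(1) by (simp add: algebra_simps)
        then show ?thesis unfolding f by (metis power_add power_mult)
      qed
      finally show "melnikov m n (apE a j) (bpE a j) (\<lambda>i j. 0) (\<lambda>i j. 0) (u^2 + u^(2*m)) = f u" .
    qed
  next
    fix e assume e1: "1 \<le> e" and e2: "2*e \<le> n+1" and f: "f = (\<lambda>u. (u^2 + u^(2*m)) ^ e)"
    obtain C where C: "\<And>t. J (2*e) 0 t = C" using J_even[of "2*e" 0] by auto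
    have C0: "C \<noteq> 0" using J_even_pos[of e] C by metis
    define ap where "ap i j = (if i = 2*e - 1 \<and> j = 0 then 1 / C else 0)" for i j :: nat
    show ?thesis unfolding realizable_def
    proof (intro exI allI impI)
      fix u :: real assume u: "u > 0"
      have "melnikov m n ap (\<lambda>i j. 0) (\<lambda>i j. 0) (\<lambda>i j. 0) (u^2 + u^(2*m))
          = (\<Sum>i\<le>n. \<Sum>j\<le>n-i. Rf m u ^ (i+j+1) * (0 * J i (Suc j) (Af m u + pi) + ap i j * J (Suc i) j (Af m u + pi)))
          + (\<Sum>i\<le>n. \<Sum>j\<le>n-i. Rf m u ^ (i+j+1) * (0 * J i (Suc j) (Af m u) + 0 * J (Suc i) j (Af m u)))"
        by (rule MEL[OF u m1])
      also have "\<dots> = (\<Sum>i\<le>n. \<Sum>j\<le>n-i. Rf m u ^ (i+j+1) * (ap i j * J (Suc i) j (Af m u + pi)))"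
        by simp
      also have "\<dots> = (\<Sum>i\<le>n. \<Sum>j\<le>n-i. if i = 2*e-1 \<and> j = 0 then Rf m u ^ (2*e) else 0)"
      proof (intro sum.cong refl)
        fix i j
        show "Rf m u ^ (i+j+1) * (ap i j * J (Suc i) j (Af m u + pi)) = (if i = 2*e-1 \<and> j = 0 then Rf m u ^ (2*e) else 0)"
        proof (cases "i = 2*e-1 \<and> j = 0")
          case True
          then have "i+j+1 = 2*e" using e1 by auto
          then have r: "Rf m u ^ (i+j+1) = Rf m u ^ (2*e)" by simp
          have s2: "Suc (2*e - Suc 0) = 2*e" using e1 by simp
          show ?thesis unfolding ap_def using True C C0 r s2 by simp
        next
          case False
          then have "ap i j = 0" unfolding ap_def by auto
          then show ?thesis using False by auto
        qed
      qed
      also have "\<dots> = Rf m u ^ (2*e)" by (rule sum2_single) (use e1 e2 in simp)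
      also have "\<dots> = f u" unfolding f Rf_def power_mult by (simp add: add_nonneg_nonneg)
      finally show "melnikov m n ap (\<lambda>i j. 0) (\<lambda>i j. 0) (\<lambda>i j. 0) (u^2 + u^(2*m)) = f u" .
    qed
  qed
qed

lemma part2:
  assumes "m = 2*k+1" "2*k \<le> n"
  shows "realizable m n (\<lambda>u. \<Sum>i<length (basis m n). c i * (basis m n ! i) u)"
proof -
  have m1: "1 \<le> m" using assms(1) by simp
  show ?thesis
  proof (rule real_sum[OF m1])
    fix i assume "i \<in> {..<length (basis m n)}"
    then have "basis m n ! i \<in> set (basis m n)" by simp
    then show "realizable m n (\<lambda>u. c i * (basis m n ! i) u)"
      by (intro real_scale[OF m1] realize_basis[OF assms])
  qed simp
qed

lemma pow_fun_eq: "(\<lambda>u::real. u ^ a) = (\<lambda>u. u ^ b) \<Longrightarrow> a = b"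
proof -
  assume "(\<lambda>u::real. u ^ a) = (\<lambda>u. u ^ b)"
  then have "(2::real) ^ a = 2 ^ b" by metis
  then show "a = b" by simp
qed

lemma pow_neq_even: "(\<lambda>u::real. u ^ (2 * v + 1)) \<noteq> (\<lambda>u. (u^2 + u^(2*m)) ^ e)"
proof
  assume "(\<lambda>u::real. u ^ (2 * v + 1)) = (\<lambda>u. (u^2 + u^(2*m)) ^ e)"
  then have "(-1::real) ^ (2 * v + 1) = ((-1)^2 + (-1)^(2*m)) ^ e" by metis
  moreover have "(0::real) < 2 ^ e" by simp
  ultimately show False by simp
qed

lemma even_fun_inj: "(\<lambda>u::real. (u^2 + u^(2*m)) ^ a) = (\<lambda>u. (u^2 + u^(2*m)) ^ b) \<Longrightarrow> a = b"
proof -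
  assume "(\<lambda>u::real. (u^2 + u^(2*m)) ^ a) = (\<lambda>u. (u^2 + u^(2*m)) ^ b)"
  then have "((1::real)^2 + 1^(2*m)) ^ a = (1^2 + 1^(2*m)) ^ b" by metis
  then show "a = b" by simp
qed

definition VS :: "nat \<Rightarrow> nat \<Rightarrow> nat list" where
  "VS k n = [0..<Zf k n + 1] @ concat (map (\<lambda>s. map (\<lambda>j. Zf k n + 2 + s + j * k) [0..<2 * s + 2]) [0..<k - 1])"

lemma basis_eq2:
  assumes "m = 2 * k + 1" "2 * k \<le> n"
  shows "basis m n = map (\<lambda>v. \<lambda>u::real. u ^ (2 * v + 1)) (VS k n)
     @ map (\<lambda>l. \<lambda>u::real. (u ^ 2 + u ^ (2 * m)) ^ (l + 1)) [0..<(n + 1) div 2]"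
  unfolding basis_eq[OF assms] VS_def by (simp add: map_concat comp_def)

lemma distinct_VS: "distinct (VS k n)"
proof -
  define Z where "Z = Zf k n"
  have inner: "distinct (map (\<lambda>j. Z + 2 + s + j * k) [0..<2 * s + 2])" if "s < k - 1" for s
  proof -
    have "0 < k" using that by simp
    have "inj_on (\<lambda>j. Z + 2 + s + j * k) (set [0..<2 * s + 2])"
      by (rule inj_onI) (use \<open>0 < k\<close> in simp)
    then show ?thesis by (simp add: distinct_map)
  qed
  have outer: "distinct (map (\<lambda>s. map (\<lambda>j. Z + 2 + s + j * k) [0..<2 * s + 2]) [0..<k - 1])"
  proof (subst distinct_map, intro conjI)
    show "distinct [0..<k - 1]" by simp
    show "inj_on (\<lambda>s. map (\<lambda>j. Z + 2 + s + j * k) [0..<2 * s + 2]) (set [0..<k - 1])"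
    proof (rule inj_onI)
      fix s s' assume "map (\<lambda>j. Z + 2 + s + j * k) [0..<2 * s + 2] = map (\<lambda>j. Z + 2 + s' + j * k) [0..<2 * s' + 2]"
      then have "map (\<lambda>j. Z + 2 + s + j * k) [0..<2 * s + 2] ! 0 = map (\<lambda>j. Z + 2 + s' + j * k) [0..<2 * s' + 2] ! 0"
        by (rule arg_cong[where f="\<lambda>l. l ! 0"])
      then show "s = s'" by (simp del: upt_Suc)
    qed
  qed
  have disj: "set (map (\<lambda>j. Z + 2 + s + j * k) [0..<2 * s + 2]) \<inter> set (map (\<lambda>j. Z + 2 + s' + j * k) [0..<2 * s' + 2]) = {}"
    if "s < k - 1" "s' < k - 1" "s \<noteq> s'" for s s'
  proof (rule ccontr)
    assume "\<not> ?thesis"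
    then obtain x where x1: "x \<in> set (map (\<lambda>j. Z + 2 + s + j * k) [0..<2 * s + 2])"
      and x2: "x \<in> set (map (\<lambda>j. Z + 2 + s' + j * k) [0..<2 * s' + 2])" by blast
    from x1 obtain j where j: "x = Z + 2 + s + j * k" by (auto simp del: upt_Suc)
    from x2 obtain j' where j': "x = Z + 2 + s' + j' * k" by (auto simp del: upt_Suc)
    from j j' have "Z + 2 + s + j * k = Z + 2 + s' + j' * k" by simp
    then have "(s + j * k) mod k = (s' + j' * k) mod k" by simp
    then have "s = s'" using that by simp
    then show False using that by simp
  qed
  have dc: "distinct (concat (map (\<lambda>s. map (\<lambda>j. Z + 2 + s + j * k) [0..<2 * s + 2]) [0..<k - 1]))"
  proof (rule distinct_concat[OF outer])
    show "\<And>ys. ys \<in> set (map (\<lambda>s. map (\<lambda>j. Z + 2 + s + j * k) [0..<2 * s + 2]) [0..<k - 1]) \<Longrightarrow> distinct ys"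
      using inner by auto
    show "\<And>ys zs. ys \<in> set (map (\<lambda>s. map (\<lambda>j. Z + 2 + s + j * k) [0..<2 * s + 2]) [0..<k - 1]) \<Longrightarrow>
      zs \<in> set (map (\<lambda>s. map (\<lambda>j. Z + 2 + s + j * k) [0..<2 * s + 2]) [0..<k - 1]) \<Longrightarrow> ys \<noteq> zs \<Longrightarrow> set ys \<inter> set zs = {}"
    proof -
      fix ys zs
      assume "ys \<in> set (map (\<lambda>s. map (\<lambda>j. Z + 2 + s + j * k) [0..<2 * s + 2]) [0..<k - 1])"
        "zs \<in> set (map (\<lambda>s. map (\<lambda>j. Z + 2 + s + j * k) [0..<2 * s + 2]) [0..<k - 1])" "ys \<noteq> zs"
      then obtain s s' where "s < k - 1" "s' < k - 1" "ys = map (\<lambda>j. Z + 2 + s + j * k) [0..<2 * s + 2]"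
        "zs = map (\<lambda>j. Z + 2 + s' + j * k) [0..<2 * s' + 2]" by auto
      moreover have "s \<noteq> s'" using calculation \<open>ys \<noteq> zs\<close> by auto
      ultimately show "set ys \<inter> set zs = {}" using disj by simp
    qed
  qed
  have "set [0..<Z + 1] \<inter> set (concat (map (\<lambda>s. map (\<lambda>j. Z + 2 + s + j * k) [0..<2 * s + 2]) [0..<k - 1])) = {}"
    by auto
  then show ?thesis unfolding VS_def Z_def[symmetric] using dc by simp
qed

lemma distinct_basis:
  assumes "m = 2 * k + 1" "2 * k \<le> n"
  shows "distinct (basis m n)"
  unfolding basis_eq2[OF assms] distinct_append
proof (intro conjI)
  show "distinct (map (\<lambda>v. \<lambda>u::real. u ^ (2 * v + 1)) (VS k n))"
    unfolding distinct_map
  proof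
    show "distinct (VS k n)" by (rule distinct_VS)
    show "inj_on (\<lambda>v. \<lambda>u::real. u ^ (2 * v + 1)) (set (VS k n))"
    proof (rule inj_onI)
      fix x y assume "(\<lambda>u::real. u ^ (2 * x + 1)) = (\<lambda>u. u ^ (2 * y + 1))"
      then have "2 * x + 1 = 2 * y + 1" by (rule pow_fun_eq)
      then show "x = y" by simp
    qed
  qed
  show "distinct (map (\<lambda>l. \<lambda>u::real. (u ^ 2 + u ^ (2 * m)) ^ (l + 1)) [0..<(n + 1) div 2])"
    unfolding distinct_map
  proof
    show "distinct [0..<(n + 1) div 2]" by simp
    show "inj_on (\<lambda>l. \<lambda>u::real. (u ^ 2 + u ^ (2 * m)) ^ (l + 1)) (set [0..<(n + 1) div 2])"
    proof (rule inj_onI)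
      fix x y assume "(\<lambda>u::real. (u ^ 2 + u ^ (2 * m)) ^ (x + 1)) = (\<lambda>u. (u ^ 2 + u ^ (2 * m)) ^ (y + 1))"
      then have "x + 1 = y + 1" by (rule even_fun_inj)
      then show "x = y" by simp
    qed
  qed
  show "set (map (\<lambda>v. \<lambda>u::real. u ^ (2 * v + 1)) (VS k n)) \<inter> set (map (\<lambda>l. \<lambda>u::real. (u ^ 2 + u ^ (2 * m)) ^ (l + 1)) [0..<(n + 1) div 2]) = {}"
  proof (rule equals0I)
    fix f assume "f \<in> set (map (\<lambda>v. \<lambda>u::real. u ^ (2 * v + 1)) (VS k n)) \<inter> set (map (\<lambda>l. \<lambda>u::real. (u ^ 2 + u ^ (2 * m)) ^ (l + 1)) [0..<(n + 1) div 2])"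
    then have f1: "f \<in> set (map (\<lambda>v. \<lambda>u::real. u ^ (2 * v + 1)) (VS k n))"
      and f2: "f \<in> set (map (\<lambda>l. \<lambda>u::real. (u ^ 2 + u ^ (2 * m)) ^ (l + 1)) [0..<(n + 1) div 2])" by auto
    obtain v where v: "f = (\<lambda>u::real. u ^ (2 * v + 1))" using in_map_E[OF f1] by blast
    obtain l where l: "f = (\<lambda>u::real. (u ^ 2 + u ^ (2 * m)) ^ (l + 1))" using in_map_E[OF f2] by blast
    show False using pow_neq_even[of v m "l+1"] v l by simp
  qed
qed

definition PP :: "(real \<Rightarrow> real) \<Rightarrow> real poly" where "PP f = (SOME P. poly P = f)"
definition ordB :: "(real \<Rightarrow> real) \<Rightarrow> nat" where "ordB f = (LEAST i. coeff (PP f) i \<noteq> 0)"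

lemma poly_order:
  assumes "poly P = f" "\<And>i. i < r0 \<Longrightarrow> coeff P i = 0" "coeff P r0 \<noteq> 0"
  shows "PP f = P" "ordB f = r0"
proof -
  have "poly (PP f) = f" unfolding PP_def using someI[of "\<lambda>P. poly P = f" P] assms(1) by blast
  then show e: "PP f = P" using assms(1) poly_eq_poly_eq_iff by metis
  show "ordB f = r0" unfolding ordB_def e
    by (rule Least_equality) (use assms(2,3) in \<open>auto simp: not_less[symmetric]\<close>)
qed

lemma odd_order: "PP (\<lambda>u. u ^ (2 * v + 1)) = monom 1 (2 * v + 1)" "ordB (\<lambda>u. u ^ (2 * v + 1)) = 2 * v + 1"
proof -
  have p: "poly (monom 1 (2 * v + 1)) = (\<lambda>u::real. u ^ (2 * v + 1))" by (rule ext) (simp add: poly_monom)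
  show "PP (\<lambda>u. u ^ (2 * v + 1)) = monom 1 (2 * v + 1)" "ordB (\<lambda>u. u ^ (2 * v + 1)) = 2 * v + 1"
    by (rule poly_order[OF p]; simp add: coeff_monom)+
qed

lemma even_poly:
  assumes "1 \<le> m"
  shows "poly (monom 1 (2*e) * (1 + monom (1::real) (2*m-2)) ^ e) = (\<lambda>u::real. (u^2 + u^(2*m)) ^ e)"
proof (rule ext)
  fix u :: real
  have "u^2 + u^(2*m) = u^2 * (1 + u^(2*m-2))"
  proof -
    have "2 + (2*m-2) = 2*m" using assms by simp
    then have "u^2 * u^(2*m-2) = u^(2*m)" by (metis power_add)
    then show ?thesis by (simp add: algebra_simps)
  qed
  then show "poly (monom 1 (2*e) * (1 + monom 1 (2*m-2)) ^ e) u = (u^2 + u^(2*m)) ^ e"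
    by (simp add: poly_monom poly_power power_mult_distrib power_mult[symmetric] mult.commute)
qed

lemma even_order:
  assumes "1 \<le> m"
  shows "PP (\<lambda>u. (u^2 + u^(2*m)) ^ e) = monom 1 (2*e) * (1 + monom 1 (2*m-2)) ^ e"
    "ordB (\<lambda>u. (u^2 + u^(2*m)) ^ e) = 2*e"
proof -
  define P where "P = monom 1 (2*e) * (1 + monom (1::real) (2*m-2)) ^ e"
  have p: "poly P = (\<lambda>u::real. (u^2 + u^(2*m)) ^ e)"
  proof (rule ext)
    fix u :: real
    have "u^2 + u^(2*m) = u^2 * (1 + u^(2*m-2))"
    proof -
      have "2 + (2*m-2) = 2*m" using assms by simp
      then have "u^2 * u^(2*m-2) = u^(2*m)" by (metis power_add)
      then show ?thesis by (simp add: algebra_simps)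
    qed
    then show "poly P u = (u^2 + u^(2*m)) ^ e"
      unfolding P_def by (simp add: poly_monom poly_power power_mult_distrib power_mult[symmetric] mult.commute)
  qed
  have c0: "coeff ((1 + monom (1::real) (2*m-2)) ^ e) 0 \<noteq> 0"
  proof -
    have "coeff ((1 + monom (1::real) (2*m-2)) ^ e) 0 = (1 + 0 ^ (2*m-2)) ^ e"
      by (simp add: poly_0_coeff_0[symmetric] poly_power poly_monom)
    moreover have "(1 + (0::real) ^ (2*m-2)) ^ e > 0" by (intro zero_less_power add_pos_nonneg) auto
    ultimately show ?thesis by linarith
  qed
  have "PP (\<lambda>u. (u^2 + u^(2*m)) ^ e) = P \<and> ordB (\<lambda>u. (u^2 + u^(2*m)) ^ e) = 2*e"
    using poly_order[OF p, of "2*e"] c0 unfolding P_def by (simp add: coeff_monom_mult)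
  then show "PP (\<lambda>u. (u^2 + u^(2*m)) ^ e) = monom 1 (2*e) * (1 + monom 1 (2*m-2)) ^ e"
    "ordB (\<lambda>u. (u^2 + u^(2*m)) ^ e) = 2*e" unfolding P_def by auto
qed

lemma basis_PP:
  assumes "m = 2*k+1" "2*k \<le> n" "f \<in> set (basis m n)"
  shows "poly (PP f) = f" "\<And>i. i < ordB f \<Longrightarrow> coeff (PP f) i = 0" "coeff (PP f) (ordB f) \<noteq> 0"
proof -
  have m1: "1 \<le> m" using assms(1) by simp
  have "poly (PP f) = f \<and> (\<forall>i < ordB f. coeff (PP f) i = 0) \<and> coeff (PP f) (ordB f) \<noteq> 0"
    using basis_cases[OF assms]
  proof (elim disjE exE conjE)
    fix D j assume f: "f = (\<lambda>u. u ^ (2*(D + k*j)+1))"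
    show ?thesis unfolding f odd_order by (auto simp: poly_monom coeff_monom)
  next
    fix e assume f: "f = (\<lambda>u. (u^2 + u^(2*m)) ^ e)"
    define Q where "Q = (1 + monom (1::real) (2*m-2)) ^ e"
    have c0: "coeff Q 0 \<noteq> 0"
    proof -
      have "coeff Q 0 = (1 + 0 ^ (2*m-2)) ^ e"
        unfolding Q_def by (simp add: poly_0_coeff_0[symmetric] poly_power poly_monom)
      moreover have "(1 + (0::real) ^ (2*m-2)) ^ e > 0" by (intro zero_less_power add_pos_nonneg) auto
      ultimately show ?thesis by linarith
    qed
    have pe: "poly (monom 1 (2*e) * Q) = (\<lambda>u::real. (u^2 + u^(2*m)) ^ e)"
      unfolding Q_def by (rule even_poly[OF m1])
    show ?thesis unfolding f even_order[OF m1] Q_def[symmetric]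
      using pe c0 by (auto simp: coeff_monom_mult)
  qed
  then show "poly (PP f) = f" "\<And>i. i < ordB f \<Longrightarrow> coeff (PP f) i = 0" "coeff (PP f) (ordB f) \<noteq> 0" by auto
qed

lemma ordB_inj:
  assumes "m = 2*k+1" "2*k \<le> n" "f \<in> set (basis m n)" "g \<in> set (basis m n)" "f \<noteq> g"
  shows "ordB f \<noteq> ordB g"
proof -
  have m1: "1 \<le> m" using assms(1) by simp
  have cf: "(\<exists>v. f = (\<lambda>u. u ^ (2 * v + 1)) \<and> ordB f = 2 * v + 1) \<or> (\<exists>e. f = (\<lambda>u. (u^2 + u^(2*m)) ^ e) \<and> ordB f = 2 * e)"
    if "f \<in> set (basis m n)" for f
    using basis_cases[OF assms(1,2) that]
  proof (elim disjE exE conjE)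
    fix D j assume "f = (\<lambda>u. u ^ (2*(D + k*j)+1))"
    then show ?thesis using odd_order(2)[of "D + k*j"] by blast
  next
    fix e assume "f = (\<lambda>u. (u^2 + u^(2*m)) ^ e)"
    then show ?thesis using even_order(2)[OF m1, of e] by blast
  qed
  show ?thesis
    using cf[OF assms(3)] cf[OF assms(4)] assms(5)
  proof (elim disjE exE conjE)
    fix v v' assume "f = (\<lambda>u. u ^ (2 * v + 1))" "ordB f = 2 * v + 1" "g = (\<lambda>u. u ^ (2 * v' + 1))" "ordB g = 2 * v' + 1" "f \<noteq> g"
    show ?thesis
    proof
      assume "ordB f = ordB g"
      then have "v = v'" using \<open>ordB f = 2 * v + 1\<close> \<open>ordB g = 2 * v' + 1\<close> by simp
      then show False using \<open>f = (\<lambda>u. u ^ (2 * v + 1))\<close> \<open>g = (\<lambda>u. u ^ (2 * v' + 1))\<close> \<open>f \<noteq> g\<close> by simp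
    qed
  next
    fix v e assume "ordB f = 2 * v + 1" "ordB g = 2 * e"
    then show ?thesis by presburger
  next
    fix e v assume "ordB f = 2 * e" "ordB g = 2 * v + 1"
    then show ?thesis by presburger
  next
    fix e e' assume "f = (\<lambda>u. (u^2 + u^(2*m)) ^ e)" "ordB f = 2 * e" "g = (\<lambda>u. (u^2 + u^(2*m)) ^ e')" "ordB g = 2 * e'" "f \<noteq> g"
    then show ?thesis by auto
  qed
qed

lemma part3:
  assumes "m = 2*k+1" "2*k \<le> n"
    and z: "\<forall>u::real. u > 0 \<longrightarrow> (\<Sum>i<length (basis m n). c i * (basis m n ! i) u) = 0"
  shows "\<forall>i<length (basis m n). c i = 0"
proof (rule ccontr)
  define B where "B = basis m n"
  define L where "L = length B"
  assume "\<not> (\<forall>i<length (basis m n). c i = 0)"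
  then obtain i1 where i1: "i1 < L" "c i1 \<noteq> 0" unfolding B_def L_def by blast
  have inB: "B ! i \<in> set (basis m n)" if "i < L" for i using that unfolding B_def L_def by simp
  define Q where "Q = (\<Sum>i<L. smult (c i) (PP (B ! i)))"
  have pQ: "poly Q u = (\<Sum>i<L. c i * (B ! i) u)" for u
    unfolding Q_def poly_sum poly_smult
    by (rule sum.cong[OF refl]) (simp add: basis_PP(1)[OF assms(1,2) inB])
  have Q0: "Q = 0"
  proof (rule ccontr)
    assume "Q \<noteq> 0"
    then have "finite {x. poly Q x = 0}" by (rule poly_roots_finite)
    moreover have "{0<..} \<subseteq> {x. poly Q x = 0}" using z unfolding pQ B_def L_def by auto
    ultimately have "finite {0::real<..}" by (rule finite_subset[rotated])
    then show False using infinite_Ioi by blast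
  qed
  define S where "S = {i. i < L \<and> c i \<noteq> 0}"
  have fS: "finite S" unfolding S_def by simp
  have i1S: "i1 \<in> S" unfolding S_def using i1 by simp
  define g where "g i = ordB (B ! i)" for i
  have "Min (g ` S) \<in> g ` S" using fS i1S by (intro Min_in) auto
  then obtain i0 where i0: "i0 \<in> S" "g i0 = Min (g ` S)" by auto
  have i0L: "i0 < L" and ci0: "c i0 \<noteq> 0" using i0(1) unfolding S_def by auto
  have "coeff Q (g i0) = (\<Sum>i<L. c i * coeff (PP (B ! i)) (g i0))"
    unfolding Q_def coeff_sum by simp
  also have "\<dots> = (\<Sum>i<L. if i = i0 then c i0 * coeff (PP (B ! i0)) (g i0) else 0)"
  proof (rule sum.cong[OF refl])
    fix i assume iL: "i \<in> {..<L}"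
    show "c i * coeff (PP (B ! i)) (g i0) = (if i = i0 then c i0 * coeff (PP (B ! i0)) (g i0) else 0)"
    proof (cases "i = i0")
      case True
      then show ?thesis by simp
    next
      case False
      show ?thesis
      proof (cases "c i = 0")
        case True
        then show ?thesis using False by simp
      next
        case ci: False
        then have iS: "i \<in> S" using iL unfolding S_def by simp
        have le: "g i0 \<le> g i" unfolding i0(2) using fS iS by (intro Min_le) auto
        have "B ! i \<noteq> B ! i0"
          using False iL i0L distinct_basis[OF assms(1,2)] unfolding B_def L_def
          by (simp add: nth_eq_iff_index_eq)
        then have "g i \<noteq> g i0" unfolding g_def
          using ordB_inj[OF assms(1,2) inB inB] iL i0L by simp
        then have "g i0 < ordB (B ! i)" using le unfolding g_def by simp
        then have "coeff (PP (B ! i)) (g i0) = 0" using basis_PP(2)[OF assms(1,2) inB] iL by simp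
        then show ?thesis using False by simp
      qed
    qed
  qed
  also have "\<dots> = c i0 * coeff (PP (B ! i0)) (g i0)" using i0L by simp
  finally have "coeff Q (g i0) = c i0 * coeff (PP (B ! i0)) (g i0)" .
  moreover have "coeff (PP (B ! i0)) (g i0) \<noteq> 0" unfolding g_def by (rule basis_PP(3)[OF assms(1,2) inB[OF i0L]])
  ultimately have "coeff Q (g i0) \<noteq> 0" using ci0 by simp
  then show False using Q0 by simp
qed

lemma len_concat: "length (concat (map (\<lambda>s. map (F s) [0..<2 * s + 2]) [0..<t])) = t * (t + 1)"
  by (induction t) auto

lemma part4:
  assumes "m = 2*k+1" "2*k \<le> n"
  shows "real (length (basis m n))
           = real_of_int \<lfloor>(real n - 1) / 2\<rfloor> + real_of_int \<lfloor>real n / 2\<rfloor> * real m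
             - real m ^ 2 / 4 + 3 / 2 * real m + 3 / 4"
proof -
  define K where "K = n div 2"
  have len: "length (basis m n) = Zf k n + 1 + (k - 1) * k + (n + 1) div 2"
    unfolding basis_eq[OF assms] by (simp only: length_append length_map length_upt len_concat) (cases k; simp add: algebra_simps)
  have Z: "real (Zf k n) = 2 * real K * real k + real K + 3 * real k - 2 * real k ^ 2"
    using Zf_int[OF assms(2)] unfolding K_def by (metis (mono_tags, opaque_lifting) of_int_of_nat_eq of_int_add of_int_diff of_int_mult of_int_numeral of_int_power)
  have rm: "real m = 2 * real k + 1" using assms(1) by simp
  have kk: "real ((k - 1) * k) = (real k - 1) * real k" by (cases k) (auto simp: algebra_simps)
  have fl2: "\<lfloor>real n / 2\<rfloor> = int K" unfolding K_def by linarith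
  consider (ev) "n = 2 * K" | (od) "n = 2 * K + 1" unfolding K_def by linarith
  then show ?thesis
  proof cases
    case ev
    have x: "(real n - 1) / 2 = real K - 1/2" using ev by (simp add: field_simps)
    have f1: "\<lfloor>(real n - 1) / 2\<rfloor> = int K - 1" unfolding x by (simp add: floor_eq_iff)
    have d: "(n + 1) div 2 = K" using ev by simp
    show ?thesis unfolding len f1 fl2 of_nat_add of_nat_1 Z kk d rm
      by (simp add: field_simps power2_eq_square)
  next
    case od
    have x: "(real n - 1) / 2 = real K" using od by (simp add: field_simps)
    have f1: "\<lfloor>(real n - 1) / 2\<rfloor> = int K" unfolding x by simp
    have d: "(n + 1) div 2 = K + 1" using od by simp
    show ?thesis unfolding len f1 fl2 of_nat_add of_nat_1 Z kk d rm
      by (simp add: field_simps power2_eq_square)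
  qed
qed

theorem lemma3p7:
  fixes m n k :: nat
  assumes "m = 2 * k + 1" and "n \<ge> m - 1"
  shows "(\<forall>ap bp am bm. \<exists>c :: nat \<Rightarrow> real. \<forall>u :: real. u > 0 \<longrightarrow>
            melnikov m n ap bp am bm (u ^ 2 + u ^ (2 * m))
              = (\<Sum>i<length (basis m n). c i * (basis m n ! i) u))
       \<and> (\<forall>c :: nat \<Rightarrow> real. \<exists>ap bp am bm. \<forall>u :: real. u > 0 \<longrightarrow>
            melnikov m n ap bp am bm (u ^ 2 + u ^ (2 * m))
              = (\<Sum>i<length (basis m n). c i * (basis m n ! i) u))
       \<and> (\<forall>c :: nat \<Rightarrow> real.
            (\<forall>u :: real. u > 0 \<longrightarrow> (\<Sum>i<length (basis m n). c i * (basis m n ! i) u) = 0)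
            \<longrightarrow> (\<forall>i<length (basis m n). c i = 0))
       \<and> real (length (basis m n))
           = real_of_int \<lfloor>(real n - 1) / 2\<rfloor> + real_of_int \<lfloor>real n / 2\<rfloor> * real m
             - real m ^ 2 / 4 + 3 / 2 * real m + 3 / 4"
proof -
  have k2: "2 * k \<le> n" using assms by simp
  have 1: "\<forall>ap bp am bm. \<exists>c :: nat \<Rightarrow> real. \<forall>u :: real. u > 0 \<longrightarrow>
            melnikov m n ap bp am bm (u ^ 2 + u ^ (2 * m))
              = (\<Sum>i<length (basis m n). c i * (basis m n ! i) u)"
    using part1[OF assms(1) k2] unfolding inspan_def by blast
  have 2: "\<forall>c :: nat \<Rightarrow> real. \<exists>ap bp am bm. \<forall>u :: real. u > 0 \<longrightarrow>
            melnikov m n ap bp am bm (u ^ 2 + u ^ (2 * m))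
              = (\<Sum>i<length (basis m n). c i * (basis m n ! i) u)"
    using part2[OF assms(1) k2] unfolding realizable_def by blast
  have 3: "\<forall>c :: nat \<Rightarrow> real.
            (\<forall>u :: real. u > 0 \<longrightarrow> (\<Sum>i<length (basis m n). c i * (basis m n ! i) u) = 0)
            \<longrightarrow> (\<forall>i<length (basis m n). c i = 0)"
    using part3[OF assms(1) k2] by blast
  have 4: "real (length (basis m n))
           = real_of_int \<lfloor>(real n - 1) / 2\<rfloor> + real_of_int \<lfloor>real n / 2\<rfloor> * real m
             - real m ^ 2 / 4 + 3 / 2 * real m + 3 / 4"
    by (rule part4[OF assms(1) k2])
  show ?thesis using 1 2 3 4 by (intro conjI)
qed

end
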